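(* Let $n\in\mathbb{N}$. Then $K_{n,n}$ contains the derived subgroup $[F,F]$ of $F$.
   Context: Thompson's group $F$ is the group of piecewise linear homeomorphisms of $[0,1]$ with finitely many dyadic breakpoints and slopes integer powers of $2$. An element $h\in F$ has the pair of branches $u\rightarrow v$ (for finite binary words $u,v$) if $h(.u\alpha)=.v\alpha$ for every infinite binary word $\alpha$. For $H\le F$ write $u\sim_H v$ if some $h\in H$ has the pair of branches $u\rightarrow v$. The closure $\mathrm{Cl}(H)$ is the subgroup of all $f\in F$ for which there is a finite subdivision of $[0,1]$ into intervals on each of which $f$ coincides with some element of $H$; $H$ is closed if $H=\mathrm{Cl}(H)$ (intersections of closed subgroups are closed). $K_{n,n}$ is the minimal closed subgroup $K$ of $F$ such that: (a) $0^k1\sim_K 0^{k+n}1$ for all $k\in\mathbb{N}$; (b) $1^k0\sim_K 1^{k+n}0$ for all $k\in\mathbb{N}$; (c) $0^k1\sim_K 1^{n+1-k}0$ for $1\le k\le n$; (d) $0^{2k}10\sim_K 1^{1+3(n-k)}0$ for $1\le k\le n$; (e) $0^{2k}11\sim_K 1^{2+3(n-k)}0$ for $1\le k\le n$; (f) $0^{2k-1}1\sim_K 1^{3(n-k+1)}0$ for $1\le k\le n$. *)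

theory Defs
  imports "HOL-Analysis.Analysis"
begin

definition dyadic :: "real \<Rightarrow> bool" where
  "dyadic x \<longleftrightarrow> (\<exists>(a::int) (k::nat). x = of_int a / 2 ^ k)"

text \<open>Thompson's group F: piecewise linear homeomorphisms of [0,1] with finitely many
  dyadic breakpoints and slopes integer powers of 2.  Elements are represented as
  functions on the reals that are the identity outside [0,1], so that the group
  operation is function composition and the inverse is inv.\<close>
definition thompsonF :: "(real \<Rightarrow> real) set" where
  "thompsonF = {f. (\<forall>x. x \<notin> {0..1} \<longrightarrow> f x = x)
      \<and> (\<exists>g. homeomorphism {0..1} {0..1} f g)
      \<and> (\<exists>xs::real list. length xs \<ge> 2 \<and> hd xs = 0 \<and> last xs = 1
           \<and> sorted_wrt (<) xs \<and> (\<forall>x\<in>set xs. dyadic x)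
           \<and> (\<forall>i. Suc i < length xs \<longrightarrow>
                 (\<exists>(m::int) (c::real). \<forall>x\<in>{xs ! i .. xs ! Suc i}.
                    f x = 2 powr (of_int m) * x + c)))}"

definition subgroupF :: "(real \<Rightarrow> real) set \<Rightarrow> bool" where
  "subgroupF H \<longleftrightarrow> H \<subseteq> thompsonF \<and> id \<in> H
      \<and> (\<forall>f\<in>H. \<forall>g\<in>H. f \<circ> g \<in> H) \<and> (\<forall>f\<in>H. inv f \<in> H)"

definition wval :: "(nat \<Rightarrow> bool) \<Rightarrow> real" where
  "wval s = (\<Sum>i. if s i then 1 / 2 ^ Suc i else 0)"

definition wcat :: "bool list \<Rightarrow> (nat \<Rightarrow> bool) \<Rightarrow> (nat \<Rightarrow> bool)" where
  "wcat u \<alpha> = (\<lambda>i. if i < length u then u ! i else \<alpha> (i - length u))"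

definition has_branch :: "(real \<Rightarrow> real) \<Rightarrow> bool list \<Rightarrow> bool list \<Rightarrow> bool" where
  "has_branch h u v \<longleftrightarrow> (\<forall>\<alpha>. h (wval (wcat u \<alpha>)) = wval (wcat v \<alpha>))"

definition simH :: "(real \<Rightarrow> real) set \<Rightarrow> bool list \<Rightarrow> bool list \<Rightarrow> bool" where
  "simH H u v \<longleftrightarrow> (\<exists>h\<in>H. has_branch h u v)"

definition ClF :: "(real \<Rightarrow> real) set \<Rightarrow> (real \<Rightarrow> real) set" where
  "ClF H = {f\<in>thompsonF. \<exists>xs::real list. length xs \<ge> 2 \<and> hd xs = 0 \<and> last xs = 1
      \<and> sorted_wrt (<) xs
      \<and> (\<forall>i. Suc i < length xs \<longrightarrow>
            (\<exists>h\<in>H. \<forall>x\<in>{xs ! i .. xs ! Suc i}. f x = h x))}"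

definition closedF :: "(real \<Rightarrow> real) set \<Rightarrow> bool" where
  "closedF H \<longleftrightarrow> H = ClF H"

definition zs_one :: "nat \<Rightarrow> bool list" where
  "zs_one k = replicate k False @ [True]"
definition os_zero :: "nat \<Rightarrow> bool list" where
  "os_zero k = replicate k True @ [False]"

text \<open>Conditions (a)-(f) defining K_{n,n}; \<open>\<nat>\<close> = positive integers here.\<close>
definition Kconds :: "nat \<Rightarrow> (real \<Rightarrow> real) set \<Rightarrow> bool" where
  "Kconds n K \<longleftrightarrow>
     (\<forall>k\<ge>1. simH K (zs_one k) (zs_one (k + n)))
   \<and> (\<forall>k\<ge>1. simH K (os_zero k) (os_zero (k + n)))
   \<and> (\<forall>k. 1 \<le> k \<and> k \<le> n \<longrightarrow> simH K (zs_one k) (os_zero (n + 1 - k)))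
   \<and> (\<forall>k. 1 \<le> k \<and> k \<le> n \<longrightarrow>
        simH K (replicate (2*k) False @ [True, False]) (os_zero (1 + 3*(n - k))))
   \<and> (\<forall>k. 1 \<le> k \<and> k \<le> n \<longrightarrow>
        simH K (replicate (2*k) False @ [True, True]) (os_zero (2 + 3*(n - k))))
   \<and> (\<forall>k. 1 \<le> k \<and> k \<le> n \<longrightarrow> simH K (zs_one (2*k - 1)) (os_zero (3*(n - k + 1))))"

definition Knn :: "nat \<Rightarrow> (real \<Rightarrow> real) set" where
  "Knn n = \<Inter> {K. subgroupF K \<and> closedF K \<and> Kconds n K}"

definition derivedF :: "(real \<Rightarrow> real) set" where
  "derivedF = \<Inter> {H. subgroupF H \<and>
      (\<forall>f\<in>thompsonF. \<forall>g\<in>thompsonF. f \<circ> g \<circ> inv f \<circ> inv g \<in> H)}"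

end

theory Submission
  imports Defs
begin


locale eqrel =
  fixes R :: "int \<Rightarrow> int \<Rightarrow> bool"
  assumes rrefl: "R x x" and rsym: "R x y \<Longrightarrow> R y x" and rtrans: "R x y \<Longrightarrow> R y z \<Longrightarrow> R x z"
begin

lemma per_nat:
  assumes "\<forall>x. R x (x + d)"
  shows "R x (x + int j * d)"
proof (induction j arbitrary: x)
  case 0 then show ?case by (simp add: rrefl)
next
  case (Suc j)
  have "R x (x + d)" using assms by blast
  moreover have "R (x + d) (x + d + int j * d)" using Suc by blast
  ultimately show ?case by (auto intro: rtrans simp: algebra_simps)
qed

lemma per_int:
  assumes "\<forall>x. R x (x + d)"
  shows "R x (x + t * d)"
proof (cases "t \<ge> 0")
  case True
  then show ?thesis using per_nat[OF assms, of x "nat t"] by simp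
next
  case False
  have "R (x + t*d) (x + t*d + int (nat (-t)) * d)" using per_nat[OF assms] by blast
  then show ?thesis using False by (auto intro: rsym)
qed

lemma per_dvd:
  assumes "\<forall>x. R x (x + d)" "d dvd (y - x)"
  shows "R x y"
proof -
  obtain t where "y - x = d * t" using assms(2) by (auto elim: dvdE)
  then have "y = x + t * d" by (simp add: algebra_simps)
  then show ?thesis using per_int[OF assms(1)] by simp
qed

lemma main:
  assumes F: "\<And>k. R (2*k-1) (3*k-2)"
    and D: "\<And>k k'. R (2*k) (2*k') \<Longrightarrow> R (3*k) (3*k') \<and> R (3*k-1) (3*k'-1)"
  shows "n \<ge> 1 \<Longrightarrow> \<forall>x. R x (x + int n) \<Longrightarrow> R x y"
proof (induction n arbitrary: x y rule: less_induct)
  case (less n)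
  have per: "R a b" if "int n dvd (b - a)" for a b using per_dvd[OF less.prems(2) that] .
  show ?case
  proof (cases "n = 1")
    case True then show ?thesis using per by simp
  next
    case n1: False
    show ?thesis
    proof (cases "even n")
      case True
      then obtain q where q: "n = 2*q" by (auto elim: evenE)
      have q1: "q \<ge> 1" "q < n" using q less.prems(1) by auto
      have A: "R (3*k) (3*k + int q) \<and> R (3*k-1) (3*k-1 + int q)" for k
      proof -
        have "R (2*k) (2*(k + int q))" by (rule per) (simp add: q)
        from D[OF this] have 1: "R (3*k) (3*(k + int q))" "R (3*k-1) (3*(k+int q)-1)" by auto
        have 2: "R (3*k + int q) (3*(k + int q))" "R (3*k-1 + int q) (3*(k+int q)-1)"
          by (rule per, simp add: q algebra_simps)+
        show ?thesis using 1 2 by (auto intro: rtrans rsym)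
      qed
      have C: "R (3*k-2) (3*k-2 + int q)" for k
      proof (cases "3 dvd n")
        case True
        then have "3 dvd q" using q by presburger
        then obtain r where "q = 3 * r" by (auto elim: dvdE)
        then have r: "n = 6 * r" using q by simp
        have E1: "R (2*k-1) (2*k-1 + 4 * int r)" for k
        proof -
          have "R (2*(k + 2*int r) - 1) (3*(k+2*int r) - 2)" by (rule F)
          moreover have "R (3*k-2) (3*(k+2*int r) - 2)" by (rule per, simp add: r algebra_simps)
          ultimately show ?thesis using F[of k] by (auto intro: rtrans rsym simp: algebra_simps)
        qed
        have E2: "R (2*k-1) (2*k-1 + 2 * int r)" for k
        proof -
          have "R (2*(k + int r)-1) (2*(k+int r)-1 + 4 * int r)" by (rule E1)
          moreover have "R (2*k-1) (2*(k+int r)-1 + 4 * int r)" by (rule per, simp add: r algebra_simps)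
          ultimately show ?thesis by (auto intro: rtrans rsym simp: algebra_simps)
        qed
        have "R (2*(k + int r)-1) (3*(k+int r)-2)" by (rule F)
        then have 1: "R (2*k-1 + 2 * int r) (3*k-2 + int q)" using r q by (simp add: algebra_simps)
        have "R (3*k-2) (2*k-1)" using F[of k] by (rule rsym)
        then show ?thesis using E2[of k] 1 by (blast intro: rtrans)
      next
        case False
        have m: "(3*k-2 + int n) mod 3 = 0 \<or> (3*k-2 + int n) mod 3 = 2"
          using False by presburger
        have "R (3*k-2 + int n) (3*k-2 + int n + int q)"
        proof (cases "(3*k-2 + int n) mod 3 = 0")
          case True
          then have "3*k-2 + int n = 3*((3*k-2 + int n) div 3)" by presburger
          then show ?thesis using A[of "(3*k-2 + int n) div 3"] by metis
        next
          case False
          with m have "(3*k-2 + int n) mod 3 = 2" by simp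
          then have "3*k-2 + int n = 3*((3*k-2 + int n) div 3 + 1) - 1" by presburger
          then show ?thesis using A[of "(3*k-2 + int n) div 3 + 1"] by metis
        qed
        moreover have "R (3*k-2) (3*k-2 + int n)" "R (3*k-2 + int q) (3*k-2 + int n + int q)"
          by (rule per, simp)+
        ultimately show ?thesis by (auto intro: rtrans rsym)
      qed
      have "\<forall>x. R x (x + int q)"
      proof
        fix x :: int
        have "0 \<le> x mod 3" "x mod 3 < 3" by simp_all
        then consider "x mod 3 = 0" | "x mod 3 = 1" | "x mod 3 = 2" by linarith
        then show "R x (x + int q)"
        proof cases
          case 1 then have "x = 3*(x div 3)" by presburger
          then show ?thesis using A[of "x div 3"] by metis
        next
          case 2 then have "x = 3*(x div 3 + 1)-2" by presburger
          then show ?thesis using C[of "x div 3 + 1"] by metis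
        next
          case 3 then have "x = 3*(x div 3 + 1)-1" by presburger
          then show ?thesis using A[of "x div 3 + 1"] by metis
        qed
      qed
      then show ?thesis using less.IH[OF q1(2) q1(1)] by blast
    next
      case odd: False
      show ?thesis
      proof (cases "3 dvd n")
        case True
        then obtain q where q: "n = 3*q" by (auto elim: dvdE)
        have q1: "q \<ge> 1" "q < n" using q less.prems(1) by auto
        have E: "R (2*k-1) (2*k-1 + 2*int q)" for k
        proof -
          have "R (2*(k + int q) - 1) (3*(k + int q) - 2)" by (rule F)
          moreover have "R (3*k-2) (3*(k + int q) - 2)" by (rule per, simp add: q algebra_simps)
          ultimately show ?thesis using F[of k] by (auto intro: rtrans rsym simp: algebra_simps)
        qed
        have E': "R x (x + 2*int q)" for x
        proof (cases "odd x")
          case True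
          then have "x = 2*((x+1) div 2)-1" by presburger
          then show ?thesis using E[of "(x+1) div 2"] by metis
        next
          case False
          then have "odd (x + int n)" using odd by simp
          then have k: "x + int n = 2*((x + int n + 1) div 2)-1" by presburger
          have "R (x + int n) (x + int n + 2 * int q)" using E[of "(x + int n + 1) div 2"] k by metis
          moreover have "R x (x + int n)" "R (x + 2*int q) (x + int n + 2 * int q)"
            by (rule per, simp)+
          ultimately show ?thesis by (auto intro: rtrans rsym)
        qed
        have "\<forall>x. R x (x + int q)"
        proof
          fix x
          have "R x (x + 2*int q)" "R (x + 2*int q) (x + 2*int q + 2*int q)" using E' by blast+
          moreover have "R (x + int q) (x + 2*int q + 2*int q)" by (rule per, simp add: q)
          ultimately show "R x (x + int q)" by (auto intro: rtrans rsym)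
        qed
        then show ?thesis using less.IH[OF q1(2) q1(1)] by blast
      next
        case n3: False
        define h :: int where "h = (int n + 1) div 2"
        have h2: "2 * h = int n + 1" using odd unfolding h_def by presburger
        have F': "R a ((3*a-1)*h)" for a
        proof -
          have 1: "R (2*((a+1)*h) - 1) (3*((a+1)*h) - 2)" by (rule F)
          have "2*((a+1)*h) - 1 - a = (a+1)*(2*h) - 1 - a" by (simp add: algebra_simps)
          also have "\<dots> = int n * (a+1)" unfolding h2 by (simp add: algebra_simps)
          finally have "R a (2*((a+1)*h) - 1)" by (intro per) simp
          moreover have "(3*a-1)*h - (3*((a+1)*h) - 2) = 2 - 2 * (2*h)" by (simp add: algebra_simps)
          then have "(3*a-1)*h - (3*((a+1)*h) - 2) = int n * (-2)" unfolding h2 by (simp add: algebra_simps)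
          then have "R (3*((a+1)*h) - 2) ((3*a-1)*h)" by (intro per) simp
          ultimately show ?thesis using 1 by (auto intro: rtrans)
        qed
        have D': "R (3*(a*h)) (3*(b*h))" if "R a b" for a b
        proof -
          have "a - 2*(a*h) = a * (1 - 2*h)" "2*(b*h) - b = b * (2*h - 1)" by (simp_all add: algebra_simps)
          then have "a - 2*(a*h) = int n * (-a)" "2*(b*h) - b = int n * b" unfolding h2 by (simp_all add: algebra_simps)
          then have "R (2*(a*h)) a" "R b (2*(b*h))" by (intro per, simp)+
          then have "R (2*(a*h)) (2*(b*h))" using that by (auto intro: rtrans)
          then show ?thesis using D by blast
        qed
        have step: "R z (z + h*h)" if "z = 9*a*h*h - 3*h*h" for a z
        proof -
          have "R (3*(a*h)) (3*(((3*a-1)*h)*h))" using D'[OF F'[of a]] .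
          moreover have "R (3*(a*h)) ((3*(3*(a*h))-1)*h)" by (rule F')
          ultimately have 1: "R (3*(((3*a-1)*h)*h)) ((3*(3*(a*h))-1)*h)" by (auto intro: rtrans rsym)
          have "int n dvd ((3*(3*(a*h))-1)*h - (z + h*h))"
          proof -
            have "(3*(3*(a*h))-1)*h - (z + h*h) = h * (2*h - 1) - 0"
              using that by (simp add: algebra_simps)
            also have "\<dots> = h * int n" using h2 by simp
            finally show ?thesis by simp
          qed
          then have "R ((3*(3*(a*h))-1)*h) (z + h*h)" by (intro per) (simp add: dvd_diff_commute)
          moreover have "3*(((3*a-1)*h)*h) = z" using that by (simp add: algebra_simps)
          ultimately show ?thesis using 1 by (auto intro: rtrans)
        qed
        have cop: "coprime (9::int) (int n)"
        proof -
          have "prime (3::int)" by simp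
          then have "coprime (3::int) (int n)" using n3 prime_imp_coprime[of 3 "int n"] by presburger
          then show ?thesis using coprime_mult_left_iff[of "3::int" 3 "int n"] by simp
        qed
        obtain uu vv where uv: "uu * 9 + vv * int n = 1"
          using bezout_int[of 9 "int n"] cop by (auto simp: coprime_iff_gcd_eq_1)
        have S: "R y (y + h*h)" for y
        proof -
          define a where "a = uu * (4*y+3)"
          define z where "z = 9*a*h*h - 3*h*h"
          have 1: "R z (z + h*h)" using step z_def by blast
          have u9: "9*uu = 1 - vv * int n" using uv by simp
          have "z = (9*uu)*(4*y+3)*h*h - 3*h*h" by (simp add: z_def a_def algebra_simps)
          also have "\<dots> = (1 - vv * int n)*(4*y+3)*h*h - 3*h*h" by (simp only: u9)
          finally have "z - y = ((2*h)*(2*h) - 1)*y - h * h * vv * int n * (4*y+3)" by (simp add: algebra_simps)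
          also have "\<dots> = int n * ((int n + 2)*y - h * h * vv * (4*y+3))" unfolding h2 by (simp add: algebra_simps)
          finally have "int n dvd (z - y)" by simp
          then have "R y z" "R (z + h*h) (y + h*h)"
            by (intro per, simp add: algebra_simps dvd_diff_commute)+
          then show ?thesis using 1 by (auto intro: rtrans)
        qed
        have S1: "R y (y + 1)" for y
        proof -
          have "R y (y + 4*(h*h))"
            using S[of y] S[of "y + h*h"] S[of "y + 2*(h*h)"] S[of "y + 3*(h*h)"]
            by (auto intro: rtrans simp: algebra_simps)
          moreover have "R (y + 4*(h*h)) (y+1)"
          proof (rule per)
            have "y + 1 - (y + 4*(h*h)) = 1 - (2*h)*(2*h)" by (simp add: algebra_simps)
            also have "\<dots> = - (int n * (int n + 2))" unfolding h2 by (simp add: algebra_simps)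
            finally show "int n dvd (y + 1 - (y + 4*(h*h)))" by simp
          qed
          ultimately show ?thesis by (auto intro: rtrans)
        qed
        have "\<forall>x. R x (x + 1)" using S1 by blast
        from per_dvd[OF this] show ?thesis by simp
      qed
    qed
  qed
qed

end


definition wterm :: "(nat \<Rightarrow> bool) \<Rightarrow> nat \<Rightarrow> real" where
  "wterm s i = (if s i then 1 / 2 ^ Suc i else 0)"

lemma wterm_le: "norm (wterm s i) \<le> (1/2) ^ Suc i"
  by (simp add: wterm_def power_divide)

lemma wterm_nonneg: "0 \<le> wterm s i"
  by (simp add: wterm_def)

lemma wterm_le': "wterm s i \<le> (1/2) ^ Suc i"
  by (simp add: wterm_def power_divide)

lemma summable_wterm: "summable (wterm s)"
proof -
  have "summable (\<lambda>n. (1/2::real)^Suc n)" using power_half_series sums_summable by blast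
  then show ?thesis by (rule summable_comparison_test'[where N=0]) (rule wterm_le)
qed

lemma wval_eq: "wval s = suminf (wterm s)"
  unfolding wval_def wterm_def by simp

lemma wval_ge0: "0 \<le> wval s"
  unfolding wval_eq by (rule suminf_nonneg[OF summable_wterm wterm_nonneg])

lemma wval_le1: "wval s \<le> 1"
proof -
  have "suminf (wterm s) \<le> (\<Sum>n. (1/2::real)^Suc n)"
    by (rule suminf_le) (use wterm_le' summable_wterm power_half_series sums_summable in auto)
  then show ?thesis unfolding wval_eq using power_half_series by (simp add: sums_iff)
qed

definition wfin :: "bool list \<Rightarrow> real" where
  "wfin u = (\<Sum>i<length u. if u ! i then 1 / 2 ^ Suc i else 0)"

lemma wval_wcat: "wval (wcat u a) = wfin u + wval a / 2 ^ length u"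
proof -
  let ?k = "length u"
  have "wval (wcat u a) = (\<Sum>i. wterm (wcat u a) (i + ?k)) + (\<Sum>i<?k. wterm (wcat u a) i)"
    unfolding wval_eq by (rule suminf_split_initial_segment[OF summable_wterm])
  moreover have "(\<Sum>i<?k. wterm (wcat u a) i) = wfin u"
    unfolding wfin_def wterm_def wcat_def by (rule sum.cong) auto
  moreover have "(\<lambda>i. wterm (wcat u a) (i + ?k)) = (\<lambda>i. wterm a i / 2 ^ ?k)"
    by (rule ext) (simp add: wterm_def wcat_def power_add)
  moreover have "(\<Sum>i. wterm a i / 2 ^ ?k) = wval a / 2 ^ ?k"
    unfolding wval_eq by (rule suminf_divide[OF summable_wterm])
  ultimately show ?thesis by simp
qed

lemma wcat_append: "wcat (u @ w) a = wcat u (wcat w a)"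
  by (rule ext) (auto simp: wcat_def nth_append)

lemma wfin_snoc: "wfin (u @ [b]) = wfin u + (if b then 1 / 2 ^ Suc (length u) else 0)"
  unfolding wfin_def by (simp add: nth_append)

lemma wfin_replicate_False: "wfin (replicate m False) = 0"
  unfolding wfin_def by simp

lemma wfin_replicate_True: "wfin (replicate m True) = 1 - 1 / 2 ^ m"
proof (induction m)
  case 0 then show ?case by (simp add: wfin_def)
next
  case (Suc m)
  have "replicate (Suc m) True = replicate m True @ [True]" by (simp add: replicate_append_same)
  then show ?case using Suc by (simp add: wfin_snoc field_simps)
qed

fun bin :: "nat \<Rightarrow> nat \<Rightarrow> bool list" where
  "bin 0 j = []"
| "bin (Suc M) j = bin M (j div 2) @ [odd j]"

lemma length_bin[simp]: "length (bin M j) = M"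
  by (induction M arbitrary: j) auto

lemma wfin_bin: "j < 2 ^ M \<Longrightarrow> wfin (bin M j) = real j / 2 ^ M"
proof (induction M arbitrary: j)
  case 0 then show ?case by (simp add: wfin_def)
next
  case (Suc M)
  have "j div 2 < 2 ^ M" using Suc.prems by simp
  then have 1: "wfin (bin M (j div 2)) = real (j div 2) / 2 ^ M" using Suc.IH by blast
  have "j = 2 * (j div 2) + (if odd j then 1 else 0)" by presburger
  then have "real j = real (2 * (j div 2) + (if odd j then 1 else 0))" by simp
  then have "real j = 2 * real (j div 2) + (if odd j then 1 else 0)" by (simp split: if_splits)
  then show ?case using 1 by (auto simp: wfin_snoc field_simps)
qed

definition intw :: "bool list \<Rightarrow> bool" where
  "intw u \<longleftrightarrow> True \<in> set u \<and> False \<in> set u"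

lemma all_eq_replicate: "(\<forall>x\<in>set u. x = b) \<Longrightarrow> u = replicate (length u) b"
  by (simp add: replicate_length_same)

lemma interior_bin:
  assumes "0 < j" "j + 1 < 2 ^ M"
  shows "intw (bin M j)"
proof -
  have j: "j < 2 ^ M" using assms by simp
  have "True \<in> set (bin M j)"
  proof (rule ccontr)
    assume "True \<notin> set (bin M j)"
    then have "\<forall>x\<in>set (bin M j). x = False" by auto
    then have "bin M j = replicate M False"
      using all_eq_replicate[of "bin M j" False] by simp
    then have "real j / 2 ^ M = 0" using wfin_bin[OF j] wfin_replicate_False by simp
    then show False using assms by simp
  qed
  moreover have "False \<in> set (bin M j)"
  proof (rule ccontr)
    assume "False \<notin> set (bin M j)"
    then have "\<forall>x\<in>set (bin M j). x = True"
    proof (intro ballI)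
      fix x assume "False \<notin> set (bin M j)" "x \<in> set (bin M j)"
      then show "x = True" by (cases x) auto
    qed
    then have "bin M j = replicate M True"
      using all_eq_replicate[of "bin M j" True] by simp
    then have "real j / 2 ^ M = 1 - 1 / 2 ^ M" using wfin_bin[OF j] wfin_replicate_True by simp
    then have "real j = 2 ^ M - 1" by (simp add: field_simps)
    then have "real (j + 1) = real (2 ^ M)" by simp
    then have "j + 1 = 2 ^ M" by (simp only: of_nat_eq_iff)
    then show False using assms by simp
  qed
  ultimately show ?thesis by (simp add: intw_def)
qed

lemma wval_surj:
  assumes "0 \<le> t" "t \<le> 1"
  shows "\<exists>a. wval a = t"
proof (cases "t = 1")
  case True
  have "wterm (\<lambda>_. True) = (\<lambda>n. (1/2::real)^Suc n)"
    by (rule ext) (simp add: wterm_def power_divide)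
  then have "wval (\<lambda>_. True) = 1" unfolding wval_eq using power_half_series by (simp add: sums_iff)
  then show ?thesis using True by blast
next
  case False
  then have t1: "t < 1" using assms by simp
  define d :: "nat \<Rightarrow> int" where "d i = floor (t * 2 ^ i)" for i
  define a where "a i = odd (d (Suc i))" for i
  have dstep: "d (Suc i) = 2 * d i + (if a i then 1 else 0)" for i
  proof -
    have e: "t * 2 ^ Suc i = 2 * (t * 2 ^ i)" by simp
    have "2 * d i \<le> d (Suc i)" "d (Suc i) \<le> 2 * d i + 1"
      unfolding d_def e by linarith+
    then show ?thesis unfolding a_def by presburger
  qed
  have d0: "d 0 = 0" unfolding d_def using assms t1 by (simp add: floor_eq_iff)
  have psum: "(\<Sum>i<N. wterm a i) = real_of_int (d N) / 2 ^ N" for N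
  proof (induction N)
    case 0 then show ?case using d0 by simp
  next
    case (Suc N)
    show ?case using Suc by (simp add: dstep wterm_def field_simps)
  qed
  have lo: "t - 1 / 2 ^ N \<le> real_of_int (d N) / 2 ^ N" for N
  proof -
    have "t * 2 ^ N - 1 \<le> real_of_int (d N)" unfolding d_def by linarith
    then have "(t * 2 ^ N - 1) / 2 ^ N \<le> real_of_int (d N) / 2 ^ N"
      by (rule divide_right_mono) simp
    moreover have "(t * 2 ^ N - 1) / 2 ^ N = t - 1 / 2 ^ N" by (simp add: field_simps)
    ultimately show ?thesis by simp
  qed
  have hi: "real_of_int (d N) / 2 ^ N \<le> t" for N
  proof -
    have "real_of_int (d N) \<le> t * 2 ^ N" unfolding d_def by linarith
    then show ?thesis by (simp add: field_simps)
  qed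
  have lim1: "(\<lambda>N. t - 1 / 2 ^ N) \<longlonglongrightarrow> t"
  proof -
    have "(\<lambda>N. (1/2::real) ^ N) \<longlonglongrightarrow> 0" by (rule LIMSEQ_realpow_zero) simp_all
    then have "(\<lambda>N. t - (1/2::real) ^ N) \<longlonglongrightarrow> t - 0" by (intro tendsto_diff tendsto_const)
    then show ?thesis by (simp add: power_divide)
  qed
  have "(\<lambda>N. real_of_int (d N) / 2 ^ N) \<longlonglongrightarrow> t"
    by (rule tendsto_sandwich[OF _ _ lim1 tendsto_const]) (use lo hi in auto)
  then have "wterm a sums t" unfolding sums_def psum .
  then have "wval a = t" unfolding wval_eq by (simp add: sums_iff)
  then show ?thesis by blast
qed

lemma cell_point:
  assumes "x \<in> {l .. l + w}" "w > 0"
  shows "\<exists>a. x = l + w * wval a"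
proof -
  have "0 \<le> (x - l) / w" "(x - l) / w \<le> 1" using assms by (auto simp: field_simps)
  then obtain a where "wval a = (x - l) / w" using wval_surj by blast
  then have "x = l + w * wval a" using assms by (simp add: field_simps)
  then show ?thesis by blast
qed



lemma thF_basic:
  assumes "f \<in> thompsonF"
  shows "\<forall>x. x \<notin> {0..1} \<longrightarrow> f x = x" "\<exists>g. homeomorphism {0..1} {0..1} f g"
  using assms unfolding thompsonF_def by blast+

lemma thF_inj:
  assumes "f \<in> thompsonF"
  shows "inj f"
proof (rule injI)
  fix x y assume eq: "f x = f y"
  obtain g where g: "homeomorphism {0..1} {0..1} f g" using thF_basic(2)[OF assms] by blast
  have out: "\<And>z. z \<notin> {0..1} \<Longrightarrow> f z = z" using thF_basic(1)[OF assms] by blast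
  have inv: "\<And>z. z \<in> {0..1} \<Longrightarrow> g (f z) = z" and img: "f ` {0..1} = {0..1}"
    using g unfolding homeomorphism_def by auto
  show "x = y"
  proof (cases "x \<in> {0..1}"; cases "y \<in> {0..1}")
    assume "x \<in> {0..1}" "y \<in> {0..1}"
    then show ?thesis using inv eq by metis
  next
    assume "x \<in> {0..1}" "y \<notin> {0..1}"
    then have "f x \<in> {0..1}" "f y = y" using img out by auto
    then show ?thesis using eq \<open>y \<notin> {0..1}\<close> by simp
  next
    assume "x \<notin> {0..1}" "y \<in> {0..1}"
    then have "f y \<in> {0..1}" "f x = x" using img out by auto
    then show ?thesis using eq \<open>x \<notin> {0..1}\<close> by simp
  next
    assume "x \<notin> {0..1}" "y \<notin> {0..1}"
    then show ?thesis using eq out by simp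
  qed
qed

lemma has_branch_app: "has_branch h u v \<Longrightarrow> has_branch h (u @ w) (v @ w)"
  unfolding has_branch_def by (simp add: wcat_append)

locale Kloc =
  fixes K :: "(real \<Rightarrow> real) set" and n :: nat
  assumes sg: "subgroupF K" and kc: "Kconds n K" and n1: "n \<ge> 1"
begin

abbreviation sim where "sim u v \<equiv> simH K u v"

lemma sim_refl: "sim u u"
  using sg unfolding subgroupF_def simH_def has_branch_def by (auto intro!: bexI[of _ id])

lemma sim_sym: "sim u v \<Longrightarrow> sim v u"
proof -
  assume "sim u v"
  then obtain h where h: "h \<in> K" "has_branch h u v" unfolding simH_def by blast
  have "h \<in> thompsonF" using h sg unfolding subgroupF_def by blast
  then have "inj h" by (rule thF_inj)
  have "inv h \<in> K" using h sg unfolding subgroupF_def by blast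
  moreover have "has_branch (inv h) v u"
    unfolding has_branch_def
  proof
    fix a
    have "h (wval (wcat u a)) = wval (wcat v a)" using h unfolding has_branch_def by blast
    then show "inv h (wval (wcat v a)) = wval (wcat u a)" using inv_f_eq[OF \<open>inj h\<close>] by metis
  qed
  ultimately show "sim v u" unfolding simH_def by blast
qed

lemma sim_trans: "sim u v \<Longrightarrow> sim v w \<Longrightarrow> sim u w"
proof -
  assume "sim u v" "sim v w"
  then obtain h1 h2 where h: "h1 \<in> K" "has_branch h1 u v" "h2 \<in> K" "has_branch h2 v w"
    unfolding simH_def by blast
  have "h2 \<circ> h1 \<in> K" using h sg unfolding subgroupF_def by blast
  moreover have "has_branch (h2 \<circ> h1) u w" using h unfolding has_branch_def by simp
  ultimately show ?thesis unfolding simH_def by blast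
qed

lemma sim_app: "sim u v \<Longrightarrow> sim (u @ w) (v @ w)"
  unfolding simH_def using has_branch_app by blast

lemma ka: "k \<ge> 1 \<Longrightarrow> sim (zs_one k) (zs_one (k + n))"
  using kc unfolding Kconds_def by blast
lemma kb: "k \<ge> 1 \<Longrightarrow> sim (os_zero k) (os_zero (k + n))"
  using kc unfolding Kconds_def by blast
lemma kc': "1 \<le> k \<Longrightarrow> k \<le> n \<Longrightarrow> sim (zs_one k) (os_zero (n + 1 - k))"
  using kc unfolding Kconds_def by blast
lemma kd: "1 \<le> k \<Longrightarrow> k \<le> n \<Longrightarrow> sim (zs_one (2*k) @ [False]) (os_zero (1 + 3*(n - k)))"
  using kc unfolding Kconds_def zs_one_def by auto
lemma ke: "1 \<le> k \<Longrightarrow> k \<le> n \<Longrightarrow> sim (zs_one (2*k) @ [True]) (os_zero (2 + 3*(n - k)))"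
  using kc unfolding Kconds_def zs_one_def by auto
lemma kf: "1 \<le> k \<Longrightarrow> k \<le> n \<Longrightarrow> sim (zs_one (2*k-1)) (os_zero (3*(n - k + 1)))"
  using kc unfolding Kconds_def by blast

lemma za_iter: "c \<ge> 1 \<Longrightarrow> sim (zs_one c) (zs_one (c + t * n))"
proof (induction t)
  case 0 then show ?case by (simp add: sim_refl)
next
  case (Suc t)
  have "sim (zs_one (c + t*n)) (zs_one (c + t*n + n))" using ka Suc.prems by simp
  from sim_trans[OF Suc.IH[OF Suc.prems] this] show ?case by (simp add: algebra_simps)
qed

lemma ob_iter: "c \<ge> 1 \<Longrightarrow> sim (os_zero c) (os_zero (c + t * n))"
proof (induction t)
  case 0 then show ?case by (simp add: sim_refl)
next
  case (Suc t)
  have "sim (os_zero (c + t*n)) (os_zero (c + t*n + n))" using kb Suc.prems by simp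
  from sim_trans[OF Suc.IH[OF Suc.prems] this] show ?case by (simp add: algebra_simps)
qed

definition rep :: "int \<Rightarrow> nat" where
  "rep a = nat ((a - 1) mod int n) + 1"

lemma rep_bounds: "1 \<le> rep a" "rep a \<le> n"
proof -
  have "0 \<le> (a - 1) mod int n" "(a - 1) mod int n < int n" using n1 by simp_all
  then show "1 \<le> rep a" "rep a \<le> n" unfolding rep_def by linarith+
qed

lemma rep_dvd: "int n dvd (int (rep a) - a)"
proof -
  have "int (rep a) = (a - 1) mod int n + 1" unfolding rep_def using n1 by simp
  moreover have "(a-1) div int n * int n + (a-1) mod int n = a - 1" by (rule div_mult_mod_eq)
  ultimately have "int (rep a) - a = int n * (- ((a-1) div int n))" by (simp add: algebra_simps)
  then show ?thesis by simp
qed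

lemma rep_cong: "int n dvd (a - b) \<Longrightarrow> rep a = rep b"
proof -
  assume "int n dvd (a - b)"
  then have "int n dvd ((a - 1) - (b - 1))" by simp
  then have "(a - 1) mod int n = (b - 1) mod int n" by (simp only: mod_eq_dvd_iff)
  then show ?thesis unfolding rep_def by simp
qed

lemma rep_eq: "1 \<le> k \<Longrightarrow> k \<le> n \<Longrightarrow> int n dvd (int k - a) \<Longrightarrow> rep a = k"
proof -
  assume k: "1 \<le> k" "k \<le> n" "int n dvd (int k - a)"
  then have "rep (int k) = rep a" using rep_cong by blast
  then have "rep a = rep (int k)" by simp
  also have "rep (int k) = k" unfolding rep_def using k by simp
  finally show ?thesis .
qed

lemma zs_rep: "a \<ge> 1 \<Longrightarrow> sim (zs_one a) (zs_one (rep (int a)))"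
proof -
  assume a: "a \<ge> 1"
  have "(int a - 1) mod int n \<le> int a - 1" using a by (intro zmod_le_nonneg_dividend) simp
  then have le: "rep (int a) \<le> a" unfolding rep_def using a by linarith
  have "int n dvd (int a - int (rep (int a)))" using rep_dvd[of "int a"] by (simp add: dvd_diff_commute)
  then have "int n dvd int (a - rep (int a))" using le by (simp add: of_nat_diff)
  then have "n dvd (a - rep (int a))" by (simp only: of_nat_dvd_iff)
  then obtain t where t: "a - rep (int a) = n * t" by (auto elim: dvdE)
  then have "a = rep (int a) + t * n" using le by (simp add: algebra_simps)
  then show ?thesis using za_iter[OF rep_bounds(1), of "int a" t] by (auto intro: sim_sym)
qed

lemma os_rep: "j \<ge> 1 \<Longrightarrow> sim (os_zero j) (zs_one (rep (1 - int j)))"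
proof -
  assume j: "j \<ge> 1"
  define r where "r = rep (int j)"
  have r: "1 \<le> r" "r \<le> n" unfolding r_def using rep_bounds by auto
  have "(int j - 1) mod int n \<le> int j - 1" using j by (intro zmod_le_nonneg_dividend) simp
  then have le: "r \<le> j" unfolding r_def rep_def using j by linarith
  have "int n dvd (int j - int r)" using rep_dvd[of "int j"] unfolding r_def by (simp add: dvd_diff_commute)
  then have "int n dvd int (j - r)" using le by (simp add: of_nat_diff)
  then have "n dvd (j - r)" by (simp only: of_nat_dvd_iff)
  then obtain t where t: "j - r = n * t" by (auto elim: dvdE)
  then have "j = r + t * n" using le by (simp add: algebra_simps)
  then have 1: "sim (os_zero r) (os_zero j)" using ob_iter[OF r(1), of t] by simp
  define k where "k = n + 1 - r"
  have k: "1 \<le> k" "k \<le> n" "n + 1 - k = r" using r unfolding k_def by auto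
  have 2: "sim (zs_one k) (os_zero r)" using kc'[OF k(1,2)] k(3) by simp
  have "rep (1 - int j) = k"
  proof (rule rep_eq[OF k(1,2)])
    have "int k - (1 - int j) = int n - int r + int j" using k r unfolding k_def by simp
    also have "\<dots> = int n * (1 + int t)" using \<open>j = r + t * n\<close> by (simp add: algebra_simps)
    finally show "int n dvd (int k - (1 - int j))" by simp
  qed
  then show ?thesis using sim_trans[OF sim_sym[OF 1] sim_sym[OF 2]] by (simp add: sim_sym)
qed

lemma rep_cong2: "rep (int (2*rep k)) = rep (2*k)"
proof (rule rep_cong)
  have eq: "int (2*rep k) - 2*k = 2*(int (rep k) - k)" by simp
  show "int n dvd (int (2*rep k) - 2*k)" unfolding eq by (rule dvd_mult[OF rep_dvd])
qed

definition R :: "int \<Rightarrow> int \<Rightarrow> bool" where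
  "R a b \<longleftrightarrow> sim (zs_one (rep a)) (zs_one (rep b))"

lemma R_eqrel: "eqrel R"
  unfolding eqrel_def R_def using sim_refl sim_sym sim_trans by blast

lemma R_per: "R x (x + int n)"
proof -
  have "rep (x + int n) = rep x" by (rule rep_cong) simp
  then show ?thesis unfolding R_def by (simp add: sim_refl)
qed

lemma R_F: "R (2*k-1) (3*k-2)"
proof -
  define k0 where "k0 = rep k"
  have k0: "1 \<le> k0" "k0 \<le> n" using rep_bounds unfolding k0_def by auto
  have dk: "int n dvd (int k0 - k)" using rep_dvd unfolding k0_def .
  have 1: "sim (zs_one (2*k0-1)) (os_zero (3*(n - k0 + 1)))" by (rule kf[OF k0])
  have 2: "sim (zs_one (2*k0-1)) (zs_one (rep (int (2*k0-1))))" by (rule zs_rep) (use k0 in simp)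
  have "rep (int (2*k0-1)) = rep (2*k-1)"
  proof (rule rep_cong)
    have eq: "int (2*k0-1) - (2*k-1) = 2 * (int k0 - k)" using k0 by simp
    show "int n dvd (int (2*k0-1) - (2*k-1))" unfolding eq by (rule dvd_mult[OF dk])
  qed
  have 3: "sim (os_zero (3*(n - k0 + 1))) (zs_one (rep (1 - int (3*(n - k0 + 1)))))"
    by (rule os_rep) (use k0 in simp)
  have "rep (1 - int (3*(n - k0 + 1))) = rep (3*k-2)"
  proof (rule rep_cong)
    have eq: "1 - int (3*(n - k0 + 1)) - (3*k-2) = 3 * (int k0 - k) - 3 * int n" using k0 by simp
    show "int n dvd (1 - int (3*(n - k0 + 1)) - (3*k-2))" unfolding eq by (rule dvd_diff[OF dvd_mult[OF dk]]) simp
  qed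
  show ?thesis unfolding R_def
  proof -
    have "sim (zs_one (rep (2*k-1))) (zs_one (2*k0-1))"
      using 2 \<open>rep (int (2*k0-1)) = rep (2*k-1)\<close> by (simp add: sim_sym)
    moreover have "sim (os_zero (3*(n - k0 + 1))) (zs_one (rep (3*k-2)))"
      using 3 \<open>rep (1 - int (3*(n - k0 + 1))) = rep (3*k-2)\<close> by simp
    ultimately show "sim (zs_one (rep (2*k-1))) (zs_one (rep (3*k-2)))"
      by (meson 1 sim_trans)
  qed
qed

lemma R_D:
  assumes "R (2*k) (2*k')"
  shows "R (3*k) (3*k') \<and> R (3*k-1) (3*k'-1)"
proof -
  have gen: "sim (zs_one (2*rep k) @ [b]) (zs_one (rep (if b then 3*k-1 else 3*k)))" for k b
  proof -
    define k0 where "k0 = rep k"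
    have k0: "1 \<le> k0" "k0 \<le> n" using rep_bounds unfolding k0_def by auto
    have dk: "int n dvd (int k0 - k)" using rep_dvd unfolding k0_def .
    show ?thesis
    proof (cases b)
      case True
      have 1: "sim (zs_one (2*k0) @ [True]) (os_zero (2 + 3*(n - k0)))" by (rule ke[OF k0])
      have 3: "sim (os_zero (2 + 3*(n - k0))) (zs_one (rep (1 - int (2 + 3*(n - k0)))))"
        by (rule os_rep) simp
      have "rep (1 - int (2 + 3*(n - k0))) = rep (3*k-1)"
      proof (rule rep_cong)
        have eq: "1 - int (2 + 3*(n - k0)) - (3*k-1) = 3 * (int k0 - k) - 3 * int n" using k0 by simp
        show "int n dvd (1 - int (2 + 3*(n - k0)) - (3*k-1))" unfolding eq by (rule dvd_diff[OF dvd_mult[OF dk]]) simp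
      qed
      then show ?thesis using sim_trans[OF 1 3] True unfolding k0_def by simp
    next
      case False
      have 1: "sim (zs_one (2*k0) @ [False]) (os_zero (1 + 3*(n - k0)))" by (rule kd[OF k0])
      have 3: "sim (os_zero (1 + 3*(n - k0))) (zs_one (rep (1 - int (1 + 3*(n - k0)))))"
        by (rule os_rep) simp
      have "rep (1 - int (1 + 3*(n - k0))) = rep (3*k)"
      proof (rule rep_cong)
        have eq: "1 - int (1 + 3*(n - k0)) - (3*k) = 3 * (int k0 - k) - 3 * int n" using k0 by simp
        show "int n dvd (1 - int (1 + 3*(n - k0)) - (3*k))" unfolding eq by (rule dvd_diff[OF dvd_mult[OF dk]]) simp
      qed
      then show ?thesis using sim_trans[OF 1 3] False unfolding k0_def by simp
    qed
  qed
  have eqv: "sim (zs_one (2*rep k)) (zs_one (2*rep k'))"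
  proof -
    have a: "sim (zs_one (2*rep k)) (zs_one (rep (int (2*rep k))))"
      by (rule zs_rep) (use rep_bounds in simp)
    have b: "sim (zs_one (2*rep k')) (zs_one (rep (int (2*rep k'))))"
      by (rule zs_rep) (use rep_bounds in simp)
    have "rep (int (2*rep k)) = rep (2*k)" "rep (int (2*rep k')) = rep (2*k')"
      using rep_cong2 by blast+
    then have "sim (zs_one (rep (int (2*rep k)))) (zs_one (rep (int (2*rep k'))))"
      using assms unfolding R_def by simp
    from sim_trans[OF sim_trans[OF a this] sim_sym[OF b]] show ?thesis .
  qed
  have e: "sim (zs_one (2*rep k) @ [b]) (zs_one (2*rep k') @ [b])" for b using sim_app[OF eqv] .
  have "sim (zs_one (rep (3*k))) (zs_one (rep (3*k')))"
    using sim_trans[OF sim_trans[OF sim_sym[OF gen[of k False]] e[of False]] gen[of k' False]] by simp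
  moreover have "sim (zs_one (rep (3*k-1))) (zs_one (rep (3*k'-1)))"
    using sim_trans[OF sim_trans[OF sim_sym[OF gen[of k True]] e[of True]] gen[of k' True]] by simp
  ultimately have "sim (zs_one (rep (3*k))) (zs_one (rep (3*k')))" "sim (zs_one (rep (3*k-1))) (zs_one (rep (3*k'-1)))"
    by blast+
  then show ?thesis unfolding R_def by simp
qed

lemma all_zs: "a \<ge> 1 \<Longrightarrow> b \<ge> 1 \<Longrightarrow> sim (zs_one a) (zs_one b)"
proof -
  assume ab: "a \<ge> 1" "b \<ge> 1"
  interpret eqrel R by (rule R_eqrel)
  have "R (int a) (int b)"
    using main[OF R_F R_D n1] R_per by blast
  then have "sim (zs_one (rep (int a))) (zs_one (rep (int b)))" unfolding R_def .
  from sim_trans[OF sim_trans[OF zs_rep[OF ab(1)] this] sim_sym[OF zs_rep[OF ab(2)]]] show ?thesis .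
qed

lemma all_os: "j \<ge> 1 \<Longrightarrow> sim (os_zero j) (zs_one 1)"
proof -
  assume "j \<ge> 1"
  then have "sim (os_zero j) (zs_one (rep (1 - int j)))" by (rule os_rep)
  moreover have "sim (zs_one (rep (1 - int j))) (zs_one 1)" using all_zs rep_bounds by simp
  ultimately show ?thesis by (rule sim_trans)
qed

lemma zs1_snoc: "sim (zs_one 1 @ [b]) (zs_one 1)"
proof -
  have 1: "sim (zs_one 1 @ [b]) (zs_one 2 @ [b])" by (rule sim_app[OF all_zs]) auto
  have 2: "sim (zs_one (2*1) @ [b]) (os_zero (if b then 2 + 3*(n-1) else 1 + 3*(n-1)))"
    using kd[of 1] ke[of 1] n1 by (cases b) auto
  have 3: "sim (os_zero (if b then 2 + 3*(n-1) else 1 + 3*(n-1))) (zs_one 1)"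
    by (rule all_os) simp
  show ?thesis using sim_trans[OF sim_trans[OF 1 2[simplified]] 3] .
qed

lemma zs1_app: "sim (zs_one 1 @ w) (zs_one 1)"
proof (induction w rule: rev_induct)
  case Nil then show ?case by (simp add: sim_refl)
next
  case (snoc b w)
  have "sim ((zs_one 1 @ w) @ [b]) (zs_one 1 @ [b])" by (rule sim_app[OF snoc])
  from sim_trans[OF this zs1_snoc] show ?case by simp
qed

lemma interior_decomp:
  assumes "intw u"
  shows "\<exists>a w. a \<ge> 1 \<and> (u = zs_one a @ w \<or> u = os_zero a @ w)"
proof -
  obtain b where b: "b = hd u" by blast
  have ne: "u \<noteq> []" using assms unfolding intw_def by auto
  let ?P = "\<lambda>x. x = b"
  define a where "a = length (takeWhile ?P u)"
  have tw: "takeWhile ?P u = replicate a b"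
  proof -
    have "\<forall>x\<in>set (takeWhile ?P u). x = b" by (auto dest: set_takeWhileD)
    then show ?thesis unfolding a_def by (rule all_eq_replicate)
  qed
  have "(\<not> b) \<in> set u" using assms unfolding intw_def by (cases b) auto
  then have dw: "dropWhile ?P u \<noteq> []" by (auto simp: dropWhile_eq_Nil_conv)
  then obtain c w where cw: "dropWhile ?P u = c # w" by (cases "dropWhile ?P u") auto
  have "c \<noteq> b" using hd_dropWhile[OF dw] cw by simp
  then have c: "c = (\<not> b)" by auto
  have "a \<ge> 1" unfolding a_def using ne b by (cases u) auto
  have "u = replicate a b @ (\<not> b) # w" using takeWhile_dropWhile_id[of ?P u] tw cw c by simp
  then show ?thesis using \<open>a \<ge> 1\<close> by (cases b) (auto simp: zs_one_def os_zero_def)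
qed

theorem all_interior: "intw u \<Longrightarrow> intw v \<Longrightarrow> sim u v"
proof -
  have main: "sim u (zs_one 1)" if iu: "intw u" for u
  proof -
    obtain a w where aw: "a \<ge> 1" "u = zs_one a @ w \<or> u = os_zero a @ w"
      using interior_decomp[OF iu] by blast
    have "sim (zs_one a) (zs_one 1)" "sim (os_zero a) (zs_one 1)"
      using all_zs all_os aw(1) by auto
    then have "sim u (zs_one 1 @ w)" using aw(2) sim_app by blast
    from sim_trans[OF this zs1_app] show ?thesis .
  qed
  assume "intw u" "intw v"
  then show ?thesis using sim_trans[OF main sim_sym[OF main]] by blast
qed

end


definition dyk :: "nat \<Rightarrow> real \<Rightarrow> bool" where
  "dyk k x \<longleftrightarrow> (\<exists>a::int. x = of_int a / 2 ^ k)"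

lemma dyadic_dyk: "dyadic x \<longleftrightarrow> (\<exists>k. dyk k x)"
  unfolding dyadic_def dyk_def by blast

lemma dyk_mono: assumes "dyk k x" "k \<le> k'" shows "dyk k' x"
proof -
  obtain a where a: "x = of_int a / 2 ^ k" using assms unfolding dyk_def by blast
  have "(2::real) ^ k' = 2 ^ k * 2 ^ (k' - k)" using assms(2) by (simp add: power_add[symmetric])
  then have "x = of_int (a * 2 ^ (k' - k)) / 2 ^ k'" using a by simp
  then show ?thesis unfolding dyk_def by blast
qed

lemma dyk_add: "dyk k x \<Longrightarrow> dyk k y \<Longrightarrow> dyk k (x + y)"
proof -
  assume "dyk k x" "dyk k y"
  then obtain a b where "x = of_int a / 2 ^ k" "y = of_int b / 2 ^ k" unfolding dyk_def by blast
  then have "x + y = of_int (a + b) / 2 ^ k" by (simp add: add_divide_distrib)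
  then show ?thesis unfolding dyk_def by blast
qed

lemma dyk_minus: "dyk k x \<Longrightarrow> dyk k (- x)"
proof -
  assume "dyk k x"
  then obtain a where "x = of_int a / 2 ^ k" unfolding dyk_def by blast
  then have "- x = of_int (- a) / 2 ^ k" by simp
  then show ?thesis unfolding dyk_def by blast
qed

lemma dyk_int: "dyk k (of_int a * 2 ^ k / 2 ^ k)"
  unfolding dyk_def by (rule exI[of _ "a * 2^k"]) simp

lemma dyk_nat: "dyk k (real j / 2 ^ k)"
  unfolding dyk_def by (rule exI[of _ "int j"]) simp

lemma dyadic_add: "dyadic x \<Longrightarrow> dyadic y \<Longrightarrow> dyadic (x + y)"
proof -
  assume "dyadic x" "dyadic y"
  then obtain k1 k2 where "dyk k1 x" "dyk k2 y" unfolding dyadic_dyk by blast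
  then have "dyk (k1 + k2) x" "dyk (k1 + k2) y" using dyk_mono by fastforce+
  then show ?thesis unfolding dyadic_dyk using dyk_add by blast
qed

lemma dyadic_minus: "dyadic x \<Longrightarrow> dyadic (- x)"
  unfolding dyadic_dyk using dyk_minus by blast

lemma dyadic_diff: "dyadic x \<Longrightarrow> dyadic y \<Longrightarrow> dyadic (x - y)"
  using dyadic_add[of x "- y"] dyadic_minus by simp

lemma dyadic_mult: "dyadic x \<Longrightarrow> dyadic y \<Longrightarrow> dyadic (x * y)"
proof -
  assume "dyadic x" "dyadic y"
  then obtain a b k1 k2 where "x = of_int a / 2 ^ k1" "y = of_int b / 2 ^ k2"
    unfolding dyadic_def by blast
  then have "x * y = of_int (a * b) / 2 ^ (k1 + k2)" by (simp add: power_add)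
  then show ?thesis unfolding dyadic_def by blast
qed

lemma dyadic_pow2: "dyadic (2 powr (of_int m))"
proof (cases "m \<ge> 0")
  case True
  then have "(2::real) powr (of_int m) = of_int (2 ^ nat m) / 2 ^ 0"
    by (simp add: powr_realpow[symmetric])
  then show ?thesis unfolding dyadic_def by blast
next
  case False
  then have "(2::real) powr (of_int m) = 1 / 2 powr (of_nat (nat (- m)))"
    by (simp add: powr_minus_divide[symmetric])
  also have "\<dots> = of_int 1 / (2::real) ^ nat (- m)" by (simp add: powr_realpow)
  finally show ?thesis unfolding dyadic_def by blast
qed

lemma dyadic_nat: "dyadic (real j / 2 ^ M)"
  unfolding dyadic_def by (rule exI[of _ "int j"], rule exI[of _ M]) simp

lemma finite_bound:
  assumes "\<forall>j<(J::nat). \<exists>k::nat. P j k" "\<And>j k k'. P j k \<Longrightarrow> k \<le> k' \<Longrightarrow> P j k'"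
  shows "\<exists>k. \<forall>j<J. P j k"
  using assms(1)
proof (induction J)
  case 0 then show ?case by simp
next
  case (Suc J)
  then obtain k where k: "\<forall>j<J. P j k" by auto
  obtain k' where k': "P J k'" using Suc.prems by auto
  have "\<forall>j<Suc J. P j (max k k')"
    using k k' assms(2) by (metis less_Suc_eq max.cobounded1 max.cobounded2)
  then show ?case by blast
qed

lemma pow2_diff: "m = int M - int d \<Longrightarrow> (2::real) powr (of_int m) = 2 ^ M / 2 ^ d"
  by (simp add: powr_diff powr_realpow)

definition cell :: "nat \<Rightarrow> nat \<Rightarrow> real set" where
  "cell M j = {real j / 2 ^ M .. real (Suc j) / 2 ^ M}"

lemma cell_sub:
  assumes "M \<le> M'"
  shows "cell M' j \<subseteq> cell M (j div 2 ^ (M' - M))"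
proof -
  define e where "e = M' - M"
  define q where "q = j div 2 ^ e"
  have M': "(2::real) ^ M' = 2 ^ M * 2 ^ e" using assms unfolding e_def by (simp add: power_add[symmetric])
  have jq: "j = q * 2 ^ e + j mod 2 ^ e" unfolding q_def by (rule div_mult_mod_eq[symmetric])
  have "j mod 2 ^ e < 2 ^ e" by simp
  have "q * 2 ^ e \<le> j" using jq by linarith
  then have "real (q * 2 ^ e) \<le> real j" by (simp only: of_nat_le_iff)
  then have 1: "real q * 2 ^ e \<le> real j" by simp
  have "Suc j \<le> q * 2 ^ e + 2 ^ e" using jq \<open>j mod 2 ^ e < 2 ^ e\<close> by linarith
  then have "real (Suc j) \<le> real (q * 2 ^ e + 2 ^ e)" by (simp only: of_nat_le_iff)
  then have 2: "real (Suc j) \<le> (real q + 1) * 2 ^ e" by (simp add: algebra_simps)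
  have "real q / 2 ^ M = (real q * 2 ^ e) / 2 ^ M'" unfolding M' by simp
  also have "\<dots> \<le> real j / 2 ^ M'" by (rule divide_right_mono[OF 1]) simp
  finally have A: "real q / 2 ^ M \<le> real j / 2 ^ M'" .
  have B1: "real (Suc j) / 2 ^ M' \<le> ((real q + 1) * 2 ^ e) / 2 ^ M'" by (rule divide_right_mono[OF 2]) simp
  have B2: "((real q + 1) * 2 ^ e) / 2 ^ M' = real (Suc q) / 2 ^ M" unfolding M' by simp
  have "real q / 2 ^ M \<le> real j / 2 ^ M'" "real (Suc j) / 2 ^ M' \<le> real (Suc q) / 2 ^ M"
    using A B1 B2 by auto
  then
  show ?thesis unfolding cell_def q_def e_def by auto
qed

lemma div_less_pow: "j < 2 ^ M' \<Longrightarrow> M \<le> M' \<Longrightarrow> j div 2 ^ (M' - M) < (2::nat) ^ M"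
  by (simp add: less_mult_imp_div_less power_add[symmetric])

lemma cell_in01: "j < 2 ^ M \<Longrightarrow> cell M j \<subseteq> {0..1}"
proof -
  assume j: "j < 2 ^ M"
  then have "Suc j \<le> 2 ^ M" by simp
  then have "real (Suc j) \<le> real ((2::nat) ^ M)" by (simp only: of_nat_le_iff)
  then have "real (Suc j) \<le> 2 ^ M" by simp
  then show ?thesis unfolding cell_def by (auto simp: field_simps)
qed

lemma cell_left: "real j / 2 ^ M \<in> cell M j" and cell_right: "real (Suc j) / 2 ^ M \<in> cell M j"
  unfolding cell_def by (auto simp: field_simps)

lemma cell_cover:
  assumes "0 \<le> x" "x < 1"
  shows "\<exists>j<2^M. x \<in> cell M j \<and> real j / 2 ^ M \<le> x \<and> x < real (Suc j) / 2 ^ M"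
proof -
  define j where "j = nat (floor (x * 2 ^ M))"
  have 1: "real j \<le> x * 2 ^ M" unfolding j_def using assms by simp
  have 2: "x * 2 ^ M < real j + 1" unfolding j_def using assms by linarith
  have "x * 2 ^ M < 1 * 2 ^ M" using assms by (intro mult_strict_right_mono) auto
  then have "real j < 2 ^ M" using 1 by linarith
  then have "real j < real ((2::nat) ^ M)" by simp
  then have "j < 2 ^ M" by (simp only: of_nat_less_iff)
  moreover have "real j / 2 ^ M \<le> x" "x < real (Suc j) / 2 ^ M" using 1 2 by (auto simp: field_simps)
  ultimately show ?thesis unfolding cell_def by auto
qed

definition grid :: "nat \<Rightarrow> real list" where
  "grid M = map (\<lambda>j. real j / 2 ^ M) [0..<Suc (2 ^ M)]"

lemma grid_props:
  "length (grid M) = Suc (2 ^ M)" "length (grid M) \<ge> 2" "hd (grid M) = 0" "last (grid M) = 1"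
  "sorted_wrt (<) (grid M)" "\<And>i. i < length (grid M) \<Longrightarrow> grid M ! i = real i / 2 ^ M"
proof -
  show "length (grid M) = Suc (2 ^ M)" unfolding grid_def by simp
  then show "length (grid M) \<ge> 2" by simp
  show "hd (grid M) = 0" unfolding grid_def by (simp add: hd_map upt_rec)
  show "last (grid M) = 1" unfolding grid_def by (simp add: last_map)
  show "sorted_wrt (<) (grid M)" unfolding grid_def sorted_wrt_map
    by (rule sorted_wrt_mono_rel[OF _ sorted_wrt_upt]) (simp add: divide_strict_right_mono)
  show "\<And>i. i < length (grid M) \<Longrightarrow> grid M ! i = real i / 2 ^ M"
    unfolding grid_def by (subst nth_map) (simp_all del: upt_Suc)
qed

definition affd :: "real set \<Rightarrow> (real \<Rightarrow> real) \<Rightarrow> bool" where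
  "affd I f \<longleftrightarrow> (\<exists>m::int. \<exists>b. dyadic b \<and> (\<forall>x\<in>I. f x = 2 powr (of_int m) * x + b))"

definition Gform :: "(real \<Rightarrow> real) \<Rightarrow> nat \<Rightarrow> bool" where
  "Gform f M \<longleftrightarrow> (\<forall>j<2^M. affd (cell M j) f)"

lemma affd_mono: "affd I f \<Longrightarrow> J \<subseteq> I \<Longrightarrow> affd J f"
  unfolding affd_def by blast

lemma Gform_mono: "Gform f M \<Longrightarrow> M \<le> M' \<Longrightarrow> Gform f M'"
  unfolding Gform_def using cell_sub div_less_pow affd_mono by metis

definition basicF :: "(real \<Rightarrow> real) \<Rightarrow> bool" where
  "basicF f \<longleftrightarrow> (\<forall>x. x \<notin> {0..1} \<longrightarrow> f x = x) \<and> (\<exists>g. homeomorphism {0..1} {0..1} f g)"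

lemma Gform_thF:
  assumes "basicF f" "Gform f M"
  shows "f \<in> thompsonF"
proof -
  have "\<forall>i. Suc i < length (grid M) \<longrightarrow> (\<exists>(m::int) (c::real). \<forall>x\<in>{grid M ! i .. grid M ! Suc i}.
                    f x = 2 powr (of_int m) * x + c)"
  proof (intro allI impI)
    fix i assume i: "Suc i < length (grid M)"
    then have "i < 2 ^ M" using grid_props(1) by simp
    then have "affd (cell M i) f" using assms(2) unfolding Gform_def by blast
    moreover have "{grid M ! i .. grid M ! Suc i} = cell M i" using i grid_props(6) unfolding cell_def by simp
    ultimately show "\<exists>(m::int) (c::real). \<forall>x\<in>{grid M ! i .. grid M ! Suc i}. f x = 2 powr (of_int m) * x + c"
      unfolding affd_def by auto
  qed
  moreover have "\<forall>x\<in>set (grid M). dyadic x" unfolding grid_def using dyadic_nat by (auto simp del: upt_Suc)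
  ultimately show ?thesis using assms(1) grid_props unfolding thompsonF_def basicF_def by blast
qed

lemma sorted_find:
  fixes xs :: "real list"
  assumes "sorted_wrt (<) xs" "xs \<noteq> []" "hd xs \<le> t" "t < last xs"
  shows "\<exists>i. Suc i < length xs \<and> xs ! i \<le> t \<and> t < xs ! Suc i"
  using assms
proof (induction xs)
  case Nil then show ?case by simp
next
  case (Cons x ys)
  show ?case
  proof (cases "ys = []")
    case True
    then have "t < x" "x \<le> t" using Cons.prems by simp_all
    then have False by linarith
    then show ?thesis ..
  next
    case False
    show ?thesis
    proof (cases "t < hd ys")
      case True
      then show ?thesis using Cons.prems False by (intro exI[of _ 0]) (auto simp: hd_conv_nth)
    next
      case nt: False
      have "sorted_wrt (<) ys" using Cons.prems by simp
      moreover have "last ys = last (x # ys)" using False by simp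
      ultimately obtain i where "Suc i < length ys" "ys ! i \<le> t" "t < ys ! Suc i"
        using Cons.IH False nt Cons.prems by auto
      then show ?thesis by (intro exI[of _ "Suc i"]) simp
    qed
  qed
qed

lemma sorted_last_ge:
  fixes xs :: "real list"
  assumes "sorted_wrt (<) xs" "i < length xs"
  shows "xs ! i \<le> last xs"
proof (cases "i = length xs - 1")
  case True
  have "xs \<noteq> []" using assms(2) by auto
  then show ?thesis using True by (simp add: last_conv_nth)
next
  case False
  then have "i < length xs - 1" using assms(2) by simp
  then have "xs ! i < xs ! (length xs - 1)" using sorted_wrt_nth_less[OF assms(1), of i "length xs - 1"] assms(2) by simp
  have "xs \<noteq> []" using assms(2) by auto
  then show ?thesis using \<open>xs ! i < xs ! (length xs - 1)\<close> by (simp add: last_conv_nth)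
qed

lemma thF_props:
  assumes "f \<in> thompsonF"
  shows "f 0 = 0" "f 1 = 1" "\<And>x y. 0 \<le> x \<Longrightarrow> x < y \<Longrightarrow> y \<le> 1 \<Longrightarrow> f x < f y"
    "f ` {0..1} = {0..1}" "basicF f" "inj f"
proof -
  obtain xs g where xs: "length xs \<ge> 2" "hd xs = 0" "last xs = 1" "sorted_wrt (<) xs"
    "\<forall>i. Suc i < length xs \<longrightarrow> (\<exists>(m::int) (c::real). \<forall>x\<in>{xs ! i .. xs ! Suc i}.
                    f x = 2 powr (of_int m) * x + c)"
    and out: "\<forall>x. x \<notin> {0..1} \<longrightarrow> f x = x" and g: "homeomorphism {0..1} {0..1} f g"
    using assms unfolding thompsonF_def by blast
  show bf: "basicF f" unfolding basicF_def using out g by blast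
  have img: "f ` {0..1} = {0..1}" and cont: "continuous_on {0..1} f" and gf: "\<And>x. x \<in> {0..1} \<Longrightarrow> g (f x) = x"
    using g unfolding homeomorphism_def by auto
  show "f ` {0..1} = {0..1}" by (rule img)
  have inj01: "inj_on f {0..1}" by (rule inj_on_inverseI[where g=g]) (use gf in auto)
  show "inj f" using thF_inj[OF assms] .
  have "xs \<noteq> []" using xs(1) by auto
  then have x0: "xs ! 0 = 0" using xs(2) by (simp add: hd_conv_nth[symmetric])
  have x1: "0 < xs ! 1" using xs sorted_wrt_nth_less[OF xs(4), of 0 1] x0 by simp
  have x1': "xs ! 1 \<le> 1" using sorted_last_ge[OF xs(4), of 1] xs by simp
  obtain m c where mc: "\<forall>x\<in>{xs ! 0 .. xs ! 1}. f x = 2 powr (of_int m) * x + c"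
    using xs(5) xs(1) by (metis One_nat_def Suc_1 Suc_le_lessD)
  have "f 0 < f (xs ! 1)" using mc x0 x1 by auto
  have f01: "f 0 < f 1"
  proof (cases "xs ! 1 = 1")
    case True then show ?thesis using \<open>f 0 < f (xs ! 1)\<close> by simp
  next
    case False
    then have "xs ! 1 < 1" using x1' by simp
    from continuous_inj_imp_mono[OF x1 this cont inj01] show ?thesis using \<open>f 0 < f (xs ! 1)\<close> by auto
  qed
  show mono: "f x < f y" if xy: "0 \<le> x" "x < y" "y \<le> 1" for x y
  proof -
    have A: "f 0 < f z" if "0 < z" "z < 1" for z
      using continuous_inj_imp_mono[OF that cont inj01] f01 by auto
    have B: "f z < f 1" if "0 < z" "z < 1" for z
      using continuous_inj_imp_mono[OF that cont inj01] f01 by auto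
    consider "x = 0" "y = 1" | "x = 0" "y < 1" | "0 < x" "y = 1" | "0 < x" "y < 1" using xy by linarith
    then show ?thesis
    proof cases
      case 1 then show ?thesis using f01 by simp
    next
      case 2 then show ?thesis using A xy by simp
    next
      case 3 then show ?thesis using B xy by simp
    next
      case 4
      have cy: "continuous_on {0..y} f" using cont by (rule continuous_on_subset) (use 4 in auto)
      have iy: "inj_on f {0..y}" using inj01 by (rule inj_on_subset) (use 4 in auto)
      from continuous_inj_imp_mono[OF 4(1) xy(2) cy iy] show ?thesis using A[of y] 4 xy by auto
    qed
  qed
  show "f 0 = 0"
  proof -
    obtain p where p: "p \<in> {0..1}" "f p = 0" using img by (metis atLeastAtMost_iff image_iff order_refl zero_le_one)
    have "f 0 \<in> {0..1}" using img by auto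
    show ?thesis
    proof (cases "p = 0")
      case True then show ?thesis using p by simp
    next
      case False
      then have "f 0 < f p" using mono[of 0 p] p by auto
      then show ?thesis using p \<open>f 0 \<in> {0..1}\<close> by simp
    qed
  qed
  show "f 1 = 1"
  proof -
    obtain p where p: "p \<in> {0..1}" "f p = 1" using img by (metis atLeastAtMost_iff image_iff order_refl zero_le_one)
    have "f 1 \<in> {0..1}" using img by auto
    show ?thesis
    proof (cases "p = 1")
      case True then show ?thesis using p by simp
    next
      case False
      then have "f p < f 1" using mono[of p 1] p by auto
      then show ?thesis using p \<open>f 1 \<in> {0..1}\<close> by simp
    qed
  qed
qed

lemma thF_Gform:
  assumes "f \<in> thompsonF"
  shows "\<exists>M. Gform f M"
proof -
  obtain xs where xs: "length xs \<ge> 2" "hd xs = 0" "last xs = 1" "sorted_wrt (<) xs"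
    "\<forall>x\<in>set xs. dyadic x"
    "\<forall>i. Suc i < length xs \<longrightarrow> (\<exists>(m::int) (c::real). \<forall>x\<in>{xs ! i .. xs ! Suc i}.
                    f x = 2 powr (of_int m) * x + c)"
    using assms unfolding thompsonF_def by blast
  have f0: "f 0 = 0" using thF_props[OF assms] by simp
  have dx: "dyadic (xs ! i)" if "i < length xs" for i using xs(5) that by simp
  have fdy: "dyadic (f (xs ! i))" if "i < length xs" for i
    using that
  proof (induction i)
    case 0
    have "xs \<noteq> []" using xs(1) by auto
    then have "xs ! 0 = 0" using xs(2) by (simp add: hd_conv_nth[symmetric])
    then show ?case using f0 unfolding dyadic_def by (auto intro!: exI[of _ 0])
  next
    case (Suc i)
    obtain m c where mc: "\<forall>x\<in>{xs ! i .. xs ! Suc i}. f x = 2 powr (of_int m) * x + c"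
      using xs(6) Suc.prems by blast
    have le: "xs ! i \<le> xs ! Suc i" using sorted_wrt_nth_less[OF xs(4), of i "Suc i"] Suc.prems by simp
    have "f (xs ! Suc i) = f (xs ! i) + 2 powr (of_int m) * (xs ! Suc i - xs ! i)"
      using mc le by (auto simp: algebra_simps)
    then show ?case using Suc dyadic_add dyadic_mult dyadic_pow2 dyadic_diff dx by simp
  qed
  have piece: "\<exists>m b. dyadic b \<and> (\<forall>x\<in>{xs ! i .. xs ! Suc i}. f x = 2 powr (of_int m) * x + b)"
    if si: "Suc i < length xs" for i
  proof -
    obtain m c where mc: "\<forall>x\<in>{xs ! i .. xs ! Suc i}. f x = 2 powr (of_int m) * x + c"
      using xs(6) si by blast
    have le: "xs ! i \<le> xs ! Suc i" using sorted_wrt_nth_less[OF xs(4), of i "Suc i"] si by simp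
    have "c = f (xs ! i) - 2 powr (of_int m) * xs ! i" using mc le by auto
    then have "dyadic c" using fdy dx si dyadic_diff dyadic_mult dyadic_pow2 by simp
    then show ?thesis using mc by blast
  qed
  have "\<forall>i<length xs. \<exists>k. dyk k (xs ! i)" using dx dyadic_dyk by blast
  then obtain M where M: "\<forall>i<length xs. dyk M (xs ! i)"
    using finite_bound[of "length xs" "\<lambda>i k. dyk k (xs ! i)"] dyk_mono by blast
  have "affd (cell M j) f" if j: "j < 2 ^ M" for j
  proof -
    have "0 \<le> real j / 2 ^ M" by simp
    moreover have "real j / 2 ^ M < 1"
    proof -
      have "real j < real ((2::nat) ^ M)" using j by (simp only: of_nat_less_iff)
      then have "real j < 2 ^ M" by simp
      then show ?thesis by (simp add: field_simps)
    qed
    ultimately obtain i where i: "Suc i < length xs" "xs ! i \<le> real j / 2 ^ M" "real j / 2 ^ M < xs ! Suc i"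
      using sorted_find[OF xs(4)] xs by (metis list.size(3) not_numeral_le_zero)
    obtain a where a: "xs ! Suc i = of_int a / 2 ^ M" using M i(1) unfolding dyk_def by blast
    have "real j < of_int a" using i(3) a by (simp add: field_simps)
    then have "real_of_int (int j) < of_int a" by simp
    then have "int j < a" by (simp only: of_int_less_iff)
    then have "int j + 1 \<le> a" by simp
    then have "real_of_int (int j + 1) \<le> of_int a" by (simp only: of_int_le_iff)
    then have "real j + 1 \<le> of_int a" by simp
    then have "real (Suc j) / 2 ^ M \<le> xs ! Suc i" using a by (simp add: field_simps)
    then have "cell M j \<subseteq> {xs ! i .. xs ! Suc i}" using i(2) unfolding cell_def by auto
    then show ?thesis using piece[OF i(1)] affd_mono unfolding affd_def by blast
  qed
  then show ?thesis unfolding Gform_def by blast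
qed



lemma Gbound:
  assumes "f \<in> thompsonF"
  shows "\<exists>M0 k. \<forall>M\<ge>M0. \<forall>j<(2::nat)^M. \<exists>(m::int) b. \<bar>m\<bar> \<le> int k \<and> dyk k b \<and>
           (\<forall>x\<in>cell M j. f x = 2 powr (of_int m) * x + b)"
proof -
  obtain M0 where M0: "Gform f M0" using thF_Gform[OF assms] by blast
  let ?P = "\<lambda>j k. \<exists>(m::int) b. \<bar>m\<bar> \<le> int k \<and> dyk k b \<and> (\<forall>x\<in>cell M0 j. f x = 2 powr (of_int m) * x + b)"
  have "\<forall>j<(2::nat)^M0. \<exists>k. ?P j k"
  proof (intro allI impI)
    fix j :: nat assume "j < 2^M0"
    then obtain m b where mb: "dyadic b" "\<forall>x\<in>cell M0 j. f x = 2 powr (of_int m) * x + b"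
      using M0 unfolding Gform_def affd_def by blast
    obtain k0 where "dyk k0 b" using mb(1) dyadic_dyk by blast
    then have "dyk (k0 + nat \<bar>m\<bar>) b" using dyk_mono by fastforce
    moreover have "\<bar>m\<bar> \<le> int (k0 + nat \<bar>m\<bar>)" by simp
    ultimately show "\<exists>k. ?P j k" using mb(2) by blast
  qed
  moreover have "?P j k'" if "?P j k" "k \<le> k'" for j k k' :: nat
    using that dyk_mono by (meson of_nat_le_iff order_trans)
  ultimately obtain k where k: "\<forall>j<(2::nat)^M0. ?P j k" using finite_bound[of "2^M0" ?P] by blast
  have "\<forall>M\<ge>M0. \<forall>j<(2::nat)^M. \<exists>(m::int) b. \<bar>m\<bar> \<le> int k \<and> dyk k b \<and>
           (\<forall>x\<in>cell M j. f x = 2 powr (of_int m) * x + b)"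
  proof (intro allI impI)
    fix M j :: nat assume "M0 \<le> M" "j < 2 ^ M"
    then have "cell M j \<subseteq> cell M0 (j div 2 ^ (M - M0))" "j div 2 ^ (M - M0) < 2 ^ M0"
      using cell_sub div_less_pow by auto
    then show "\<exists>(m::int) b. \<bar>m\<bar> \<le> int k \<and> dyk k b \<and> (\<forall>x\<in>cell M j. f x = 2 powr (of_int m) * x + b)"
      using k by blast
  qed
  then show ?thesis by blast
qed

lemma aff_image:
  fixes g :: "real \<Rightarrow> real"
  assumes g: "\<forall>x\<in>cell M j. g x = 2 powr (of_int m) * x + b" and b: "dyk k b" and m: "\<bar>m\<bar> \<le> int k"
    and Mk: "L + 2*k \<le> M"
    and nonneg: "0 \<le> g (real j / 2^M)" and le1: "g (real (Suc j) / 2^M) \<le> 1"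
  shows "\<exists>d p. L \<le> d \<and> d \<le> M + k \<and> p < 2^d \<and> (\<forall>x\<in>cell M j. g x = (real p + (x * 2^M - real j)) / 2^d)"
proof -
  define d where "d = nat (int M - m)"
  have dM: "int d = int M - m" unfolding d_def using m Mk by simp
  have dk: "k \<le> d" "L \<le> d" "d \<le> M + k" using dM m Mk by linarith+
  obtain \<beta> where \<beta>: "b = of_int \<beta> / 2 ^ k" using b unfolding dyk_def by blast
  have pm: "(2::real) powr (of_int m) = 2 ^ M / 2 ^ d" by (rule pow2_diff) (use dM in simp)
  have dd: "(2::real) ^ d = 2 ^ k * 2 ^ (d - k)" using dk by (simp add: power_add[symmetric])
  define pz :: int where "pz = int j + \<beta> * 2 ^ (d - k)"
  have form: "g x = (of_int pz + (x * 2^M - real j)) / 2^d" if "x \<in> cell M j" for x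
  proof -
    have "g x = 2 ^ M / 2 ^ d * x + of_int \<beta> / 2 ^ k" using g that pm \<beta> by simp
    also have "of_int \<beta> / 2 ^ k = of_int \<beta> * 2 ^ (d - k) / (2::real) ^ d" unfolding dd by simp
    also have "2 ^ M / 2 ^ d * x + of_int \<beta> * 2 ^ (d - k) / (2::real) ^ d
       = (of_int pz + (x * 2^M - real j)) / 2^d" unfolding pz_def by (simp add: field_simps)
    finally show ?thesis .
  qed
  have "0 \<le> (of_int pz + (real j / 2 ^ M * 2^M - real j)) / (2::real)^d"
    using form[OF cell_left] nonneg by simp
  then have A: "0 \<le> real_of_int pz / 2 ^ d" by simp
  have "real_of_int pz = (real_of_int pz / 2 ^ d) * 2 ^ d" by simp
  then have "0 \<le> real_of_int pz" using mult_nonneg_nonneg[OF A, of "2 ^ d"] by simp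
  then have pz0: "0 \<le> pz" by simp
  have "(of_int pz + (real (Suc j) / 2 ^ M * 2^M - real j)) / (2::real)^d \<le> 1"
    using form[OF cell_right] le1 by simp
  then have "real_of_int pz + 1 \<le> 2 ^ d" by (simp add: field_simps)
  then have "real_of_int (pz + 1) \<le> real_of_int (2 ^ d)" by simp
  then have "pz + 1 \<le> 2 ^ d" by (simp only: of_int_le_iff)
  then have "nat pz < 2 ^ d" using pz0 by (simp add: nat_less_iff)
  moreover have "\<forall>x\<in>cell M j. g x = (real (nat pz) + (x * 2^M - real j)) / 2^d"
    using form pz0 by simp
  ultimately show ?thesis using dk by blast
qed

lemma homeo_cong:
  assumes "homeomorphism S T f g" "\<forall>x\<in>S. f' x = f x"
  shows "homeomorphism S T f' g"
  by (rule homeomorphism_cong[OF assms(1) refl refl]) (use assms(2) in auto)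

lemma thF_comp:
  assumes f: "f \<in> thompsonF" and g: "g \<in> thompsonF"
  shows "f \<circ> g \<in> thompsonF"
proof -
  have bf: "basicF f" and bg: "basicF g" using thF_props(5)[OF f] thF_props(5)[OF g] by simp_all
  have "basicF (f \<circ> g)"
  proof -
    obtain f' g' where "homeomorphism {0..1} {0..1} f f'" "homeomorphism {0..1} {0..1} g g'"
      using bf bg unfolding basicF_def by blast
    then have "homeomorphism {0..1} {0..1} (f \<circ> g) (g' \<circ> f')" using homeomorphism_compose[of _ _ g g' _ f f'] by simp
    moreover have "\<forall>x. x \<notin> {0..1} \<longrightarrow> (f \<circ> g) x = x" using bf bg unfolding basicF_def by simp
    ultimately show ?thesis unfolding basicF_def by blast
  qed
  moreover
  obtain Mg kg where Mg: "\<forall>M\<ge>Mg. \<forall>j<(2::nat)^M. \<exists>(m::int) b. \<bar>m\<bar> \<le> int kg \<and> dyk kg b \<and>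
           (\<forall>x\<in>cell M j. g x = 2 powr (of_int m) * x + b)" using Gbound[OF g] by blast
  obtain Mf kf where Mf: "\<forall>M\<ge>Mf. \<forall>j<(2::nat)^M. \<exists>(m::int) b. \<bar>m\<bar> \<le> int kf \<and> dyk kf b \<and>
           (\<forall>x\<in>cell M j. f x = 2 powr (of_int m) * x + b)" using Gbound[OF f] by blast
  define M where "M = Mg + Mf + 2 * kg"
  have gimg: "g x \<in> {0..1}" if "x \<in> {0..1}" for x using thF_props(4)[OF g] that by blast
  have "Gform (f \<circ> g) M" unfolding Gform_def
  proof (intro allI impI)
    fix j :: nat assume j: "j < 2 ^ M"
    obtain m b where mb: "\<bar>m\<bar> \<le> int kg" "dyk kg b" "\<forall>x\<in>cell M j. g x = 2 powr (of_int m) * x + b"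
      using Mg[rule_format, of M j] j unfolding M_def by auto
    have c01: "cell M j \<subseteq> {0..1}" by (rule cell_in01[OF j])
    have h1: "0 \<le> g (real j / 2^M)" using gimg[of "real j / 2^M"] c01 cell_left[of j M] by auto
    have h2: "g (real (Suc j) / 2^M) \<le> 1" using gimg[of "real (Suc j) / 2^M"] c01 cell_right[of j M] by auto
    have h3: "Mf + 2 * kg \<le> M" unfolding M_def by simp
    obtain d p where dp: "Mf \<le> d" "p < 2^d" "\<forall>x\<in>cell M j. g x = (real p + (x * 2^M - real j)) / 2^d"
      using aff_image[OF mb(3) mb(2) mb(1) h3 h1 h2] by blast
    obtain m' b' where mb': "dyk kf b'" "\<forall>y\<in>cell d p. f y = 2 powr (of_int m') * y + b'"
      using Mf[rule_format, OF dp(1,2)] by blast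
    have ginc: "g x \<in> cell d p" if xc: "x \<in> cell M j" for x
    proof -
      have "real j / 2 ^ M \<le> x" "x \<le> real (Suc j) / 2 ^ M" using xc unfolding cell_def by auto
      then have "real j \<le> x * 2 ^ M" "x * 2 ^ M \<le> real j + 1"
        by (simp_all add: pos_divide_le_eq pos_le_divide_eq)
      then have "real p \<le> real p + (x * 2^M - real j)" "real p + (x * 2^M - real j) \<le> real (Suc p)" by simp_all
      then have "real p / 2 ^ d \<le> (real p + (x * 2^M - real j)) / 2^d"
        "(real p + (x * 2^M - real j)) / 2^d \<le> real (Suc p) / 2 ^ d"
        by (simp_all add: divide_right_mono)
      then show ?thesis unfolding dp(3)[rule_format, OF xc] cell_def by simp
    qed
    have "\<forall>x\<in>cell M j. (f \<circ> g) x = 2 powr (of_int (m + m')) * x + (2 powr (of_int m') * b + b')"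
    proof
      fix x assume x: "x \<in> cell M j"
      have "(f \<circ> g) x = 2 powr (of_int m') * (2 powr (of_int m) * x + b) + b'"
        using mb'(2) ginc[OF x] mb(3) x by simp
      also have "\<dots> = 2 powr (of_int (m + m')) * x + (2 powr (of_int m') * b + b')"
        by (simp add: powr_add algebra_simps)
      finally show "(f \<circ> g) x = 2 powr (of_int (m + m')) * x + (2 powr (of_int m') * b + b')" .
    qed
    moreover have "dyadic (2 powr (of_int m') * b + b')"
    proof -
      have "dyadic b" "dyadic b'" using mb(2) mb'(1) dyadic_dyk by blast+
      then show ?thesis by (intro dyadic_add dyadic_mult dyadic_pow2)
    qed
    ultimately show "affd (cell M j) (f \<circ> g)" unfolding affd_def by blast
  qed
  ultimately show ?thesis by (rule Gform_thF)
qed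

lemma thF_inv:
  assumes f: "f \<in> thompsonF"
  shows "inv f \<in> thompsonF"
proof -
  have bf: "basicF f" and injf: "inj f" and f0: "f 0 = 0" and f1: "f 1 = 1"
    and mono: "\<And>x y. 0 \<le> x \<Longrightarrow> x < y \<Longrightarrow> y \<le> 1 \<Longrightarrow> f x < f y"
    using thF_props[OF f] by simp_all
  obtain g where g: "homeomorphism {0..1} {0..1} f g" and out: "\<forall>x. x \<notin> {0..1} \<longrightarrow> f x = x"
    using bf unfolding basicF_def by blast
  have g01: "g y \<in> {0..1}" "f (g y) = y" if "y \<in> {0..1}" for y
    using g that unfolding homeomorphism_def by auto
  have invg: "inv f y = g y" if "y \<in> {0..1}" for y using inv_f_eq[OF injf g01(2)[OF that]] .
  have "basicF (inv f)"
  proof -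
    have "homeomorphism {0..1} {0..1} g f" using g by (rule homeomorphism_symD)
    then have "homeomorphism {0..1} {0..1} (inv f) f" by (rule homeo_cong) (use invg in auto)
    moreover have "\<forall>x. x \<notin> {0..1} \<longrightarrow> inv f x = x" using out inv_f_eq[OF injf] by blast
    ultimately show ?thesis unfolding basicF_def by blast
  qed
  moreover
  obtain M0 k where Mk: "\<forall>M\<ge>M0. \<forall>j<(2::nat)^M. \<exists>(m::int) b. \<bar>m\<bar> \<le> int k \<and> dyk k b \<and>
           (\<forall>x\<in>cell M j. f x = 2 powr (of_int m) * x + b)" using Gbound[OF f] by blast
  define M where "M = M0 + 2 * k"
  define L where "L = M + k"
  have "Gform (inv f) L" unfolding Gform_def
  proof (intro allI impI)
    fix q :: nat assume q: "q < 2 ^ L"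
    define y0 where "y0 = real q / 2 ^ L"
    have y0: "0 \<le> y0" "y0 < 1" unfolding y0_def using q
      by (auto simp: field_simps)
    define x0 where "x0 = g y0"
    have x0: "x0 \<in> {0..1}" "f x0 = y0" unfolding x0_def using g01 y0 by auto
    have "x0 \<noteq> 1" using x0 f1 y0 by auto
    then obtain j where j: "j < 2 ^ M" "real j / 2 ^ M \<le> x0" "x0 < real (Suc j) / 2 ^ M"
      using cell_cover[of x0 M] x0 by auto
    obtain m b where mb: "\<bar>m\<bar> \<le> int k" "dyk k b" "\<forall>x\<in>cell M j. f x = 2 powr (of_int m) * x + b"
      using Mk[rule_format, of M j] j unfolding M_def by auto
    have c01: "cell M j \<subseteq> {0..1}" by (rule cell_in01[OF j(1)])
    have fimg: "f x \<in> {0..1}" if "x \<in> {0..1}" for x using thF_props(4)[OF f] that by blast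
    have h1: "0 \<le> f (real j / 2^M)" using fimg[of "real j / 2^M"] c01 cell_left[of j M] by auto
    have h2: "f (real (Suc j) / 2^M) \<le> 1" using fimg[of "real (Suc j) / 2^M"] c01 cell_right[of j M] by auto
    have h3: "0 + 2 * k \<le> M" unfolding M_def by simp
    obtain d p where dp: "d \<le> M + k" "p < 2^d" "\<forall>x\<in>cell M j. f x = (real p + (x * 2^M - real j)) / 2^d"
      using aff_image[OF mb(3) mb(2) mb(1) h3 h1 h2] by blast
    have fl: "f (real j / 2 ^ M) = real p / 2 ^ d" using dp(3) cell_left[of j M] by simp
    have fr: "f (real (Suc j) / 2 ^ M) = (real p + 1) / 2 ^ d" using dp(3) cell_right[of j M] by simp
    have "f (real j / 2 ^ M) \<le> y0"
    proof (cases "real j / 2 ^ M = x0")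
      case True then show ?thesis using x0 by simp
    next
      case False then show ?thesis using mono[of "real j / 2 ^ M" x0] j x0 by simp
    qed
    have yr: "y0 < f (real (Suc j) / 2 ^ M)" using mono[of x0 "real (Suc j) / 2 ^ M"] j x0 c01 cell_right[of j M] by auto
    have LD: "(2::real) ^ L = 2 ^ d * 2 ^ (L - d)" using dp(1) unfolding L_def by (simp add: power_add[symmetric])
    have "real q / 2 ^ L < (real p + 1) / 2 ^ d" using yr fr unfolding y0_def by simp
    then have "real q < (real p + 1) * 2 ^ (L - d)" unfolding LD by (simp add: field_simps)
    then have "real q < real ((p + 1) * 2 ^ (L - d))" by (simp add: algebra_simps)
    then have "q < (p + 1) * 2 ^ (L - d)" by (simp only: of_nat_less_iff)
    then have "Suc q \<le> (p + 1) * 2 ^ (L - d)" by simp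
    then have "real (Suc q) \<le> real ((p + 1) * 2 ^ (L - d))" by (simp only: of_nat_le_iff)
    then have "real (Suc q) / 2 ^ L \<le> real ((p + 1) * 2 ^ (L - d)) / 2 ^ L"
      by (rule divide_right_mono) simp
    also have "real ((p + 1) * 2 ^ (L - d)) / 2 ^ L = (real p + 1) / 2 ^ d" unfolding LD by (simp add: field_simps)
    finally have "real (Suc q) / 2 ^ L \<le> (real p + 1) / 2 ^ d" .
    then have upper: "real (Suc q) / 2 ^ L \<le> f (real (Suc j) / 2 ^ M)" using fr by simp
    have lower: "f (real j / 2 ^ M) \<le> real q / 2 ^ L" using \<open>f (real j / 2 ^ M) \<le> y0\<close> unfolding y0_def .
    have "\<forall>y\<in>cell L q. inv f y = 2 powr (of_int (- m)) * y + (- (2 powr (of_int (- m)) * b))"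
    proof
      fix y assume y: "y \<in> cell L q"
      have y01: "y \<in> {0..1}" using cell_in01[OF q] y by blast
      define x where "x = g y"
      have x: "x \<in> {0..1}" "f x = y" unfolding x_def using g01 y01 by auto
      have "real j / 2 ^ M \<le> x"
      proof (rule ccontr)
        assume "\<not> real j / 2 ^ M \<le> x"
        then have "f x < f (real j / 2 ^ M)" using mono[of x "real j / 2 ^ M"] x c01 cell_left[of j M] by auto
        then show False using x lower y unfolding cell_def by auto
      qed
      moreover have "x \<le> real (Suc j) / 2 ^ M"
      proof (rule ccontr)
        assume "\<not> x \<le> real (Suc j) / 2 ^ M"
        then have "f (real (Suc j) / 2 ^ M) < f x" using mono[of "real (Suc j) / 2 ^ M" x] x c01 cell_right[of j M] by auto
        then show False using x upper y unfolding cell_def by auto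
      qed
      ultimately have "x \<in> cell M j" unfolding cell_def by auto
      then have "y = 2 powr (of_int m) * x + b" using mb(3) x by simp
      then have "x = 2 powr (of_int (- m)) * y + (- (2 powr (of_int (- m)) * b))"
        by (simp add: powr_minus field_simps)
      then show "inv f y = 2 powr (of_int (- m)) * y + (- (2 powr (of_int (- m)) * b))"
        using invg[OF y01] x_def by simp
    qed
    moreover have "dyadic (- (2 powr (of_int (- m)) * b))"
    proof -
      have "dyadic b" using mb(2) dyadic_dyk by blast
      then show ?thesis by (intro dyadic_minus dyadic_mult dyadic_pow2)
    qed
    ultimately show "affd (cell L q) (inv f)" unfolding affd_def by blast
  qed
  ultimately show ?thesis by (rule Gform_thF)
qed



definition near0 :: "(real \<Rightarrow> real) \<Rightarrow> real \<Rightarrow> real \<Rightarrow> bool" where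
  "near0 f a e \<longleftrightarrow> a > 0 \<and> e > 0 \<and> (\<forall>x\<in>{0..e}. f x = a * x)"

definition near1 :: "(real \<Rightarrow> real) \<Rightarrow> real \<Rightarrow> real \<Rightarrow> bool" where
  "near1 f a e \<longleftrightarrow> a > 0 \<and> e > 0 \<and> (\<forall>x\<in>{1-e..1}. f x = 1 - a * (1 - x))"

lemma thF_near:
  assumes f: "f \<in> thompsonF"
  shows "\<exists>a e. near0 f a e" "\<exists>a e. near1 f a e"
proof -
  obtain M0 k where Mk: "\<forall>M\<ge>M0. \<forall>j<(2::nat)^M. \<exists>(m::int) b. \<bar>m\<bar> \<le> int k \<and> dyk k b \<and>
           (\<forall>x\<in>cell M j. f x = 2 powr (of_int m) * x + b)" using Gbound[OF f] by blast
  have f0: "f 0 = 0" and f1: "f 1 = 1" using thF_props[OF f] by simp_all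
  have pos: "(0::real) < 1 / 2 ^ M0" by simp
  obtain m b where mb: "\<forall>x\<in>cell M0 0. f x = 2 powr (of_int m) * x + b"
    using Mk[rule_format, of M0 0] by auto
  have c0: "cell M0 0 = {0 .. 1 / 2 ^ M0}" unfolding cell_def by simp
  have "f 0 = b" using mb c0 by simp
  then have "b = 0" using f0 by simp
  then have "near0 f (2 powr (of_int m)) (1 / 2 ^ M0)" unfolding near0_def using mb c0 pos by simp
  then show "\<exists>a e. near0 f a e" by blast
  define J where "J = 2 ^ M0 - (1::nat)"
  have J: "J < 2 ^ M0" "Suc J = 2 ^ M0" unfolding J_def by simp_all
  obtain m b where mb: "\<forall>x\<in>cell M0 J. f x = 2 powr (of_int m) * x + b"
    using Mk[rule_format, of M0 J] J by auto
  have "real (Suc J) = real ((2::nat) ^ M0)" using J(2) by (simp only:)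
  then have RJ: "real (Suc J) = 2 ^ M0" by simp
  then have "real J = 2 ^ M0 - 1" by simp
  then have "real J / 2 ^ M0 = 1 - 1 / 2 ^ M0" by (simp add: field_simps)
  moreover have "real (Suc J) / 2 ^ M0 = 1" using RJ by simp
  ultimately have c1: "cell M0 J = {1 - 1 / 2 ^ M0 .. 1}" unfolding cell_def by simp
  have "f 1 = 2 powr (of_int m) + b" using mb c1 by simp
  then have "b = 1 - 2 powr (of_int m)" using f1 by simp
  then have "near1 f (2 powr (of_int m)) (1 / 2 ^ M0)" unfolding near1_def using mb c1 pos
    by (simp add: algebra_simps)
  then show "\<exists>a e. near1 f a e" by blast
qed

lemma near0_comp: "near0 f a e \<Longrightarrow> near0 g b e' \<Longrightarrow> near0 (f \<circ> g) (a * b) (min e' (e / b))"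
  unfolding near0_def
proof (intro conjI ballI)
  assume f: "0 < a \<and> 0 < e \<and> (\<forall>x\<in>{0..e}. f x = a * x)" and g: "0 < b \<and> 0 < e' \<and> (\<forall>x\<in>{0..e'}. g x = b * x)"
  show "0 < a * b" "0 < min e' (e / b)" using f g by auto
  fix x assume x: "x \<in> {0..min e' (e / b)}"
  then have gx: "g x = b * x" using g by auto
  have "b * x \<le> e" using x g by (auto simp: field_simps)
  then have "f (b * x) = a * (b * x)" using f g x by auto
  then show "(f \<circ> g) x = a * b * x" using gx by simp
qed

lemma near0_inv: "near0 f a e \<Longrightarrow> inj f \<Longrightarrow> near0 (inv f) (1 / a) (a * e)"
  unfolding near0_def
proof (intro conjI ballI)
  assume f: "0 < a \<and> 0 < e \<and> (\<forall>x\<in>{0..e}. f x = a * x)" and "inj f"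
  show "0 < 1 / a" "0 < a * e" using f by auto
  fix y assume y: "y \<in> {0..a * e}"
  have "y / a \<in> {0..e}" using y f by (auto simp: field_simps)
  then have "f (y / a) = y" using f by auto
  then have "inv f y = y / a" by (rule inv_f_eq[OF \<open>inj f\<close>])
  then show "inv f y = 1 / a * y" by simp
qed

lemma near1_comp: "near1 f a e \<Longrightarrow> near1 g b e' \<Longrightarrow> near1 (f \<circ> g) (a * b) (min e' (e / b))"
  unfolding near1_def
proof (intro conjI ballI)
  assume f: "0 < a \<and> 0 < e \<and> (\<forall>x\<in>{1-e..1}. f x = 1 - a * (1 - x))"
    and g: "0 < b \<and> 0 < e' \<and> (\<forall>x\<in>{1-e'..1}. g x = 1 - b * (1 - x))"
  show "0 < a * b" "0 < min e' (e / b)" using f g by auto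
  fix x assume x: "x \<in> {1 - min e' (e / b)..1}"
  then have gx: "g x = 1 - b * (1 - x)" using g by auto
  have "1 - x \<le> e / b" using x by auto
  then have "b * (1 - x) \<le> b * (e / b)" using g by (intro mult_left_mono) auto
  then have "b * (1 - x) \<le> e" using g by simp
  moreover have "0 \<le> b * (1 - x)" using x g by auto
  ultimately have "f (1 - b * (1 - x)) = 1 - a * (b * (1 - x))" using f by auto
  then show "(f \<circ> g) x = 1 - a * b * (1 - x)" using gx by simp
qed

lemma near1_inv: "near1 f a e \<Longrightarrow> inj f \<Longrightarrow> near1 (inv f) (1 / a) (a * e)"
  unfolding near1_def
proof (intro conjI ballI)
  assume f: "0 < a \<and> 0 < e \<and> (\<forall>x\<in>{1-e..1}. f x = 1 - a * (1 - x))" and "inj f"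
  show "0 < 1 / a" "0 < a * e" using f by auto
  fix y assume y: "y \<in> {1 - a * e..1}"
  have "1 - (1 - y) / a \<in> {1-e..1}" using y f by (auto simp: field_simps)
  then have "f (1 - (1 - y) / a) = y" using f by auto
  then have "inv f y = 1 - (1 - y) / a" by (rule inv_f_eq[OF \<open>inj f\<close>])
  then show "inv f y = 1 - 1 / a * (1 - y)" by simp
qed

lemma comm_ends:
  assumes f: "f \<in> thompsonF" and g: "g \<in> thompsonF"
  shows "\<exists>e>0. \<forall>x. (0 \<le> x \<and> x \<le> e) \<or> (1 - e \<le> x \<and> x \<le> 1) \<longrightarrow> (f \<circ> g \<circ> inv f \<circ> inv g) x = x"
proof -
  have injf: "inj f" and injg: "inj g" using thF_props f g by blast+
  obtain a e b e' where n0: "near0 f a e" "near0 g b e'" using thF_near(1) f g by meson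
  obtain a1 e1 b1 e1' where n1: "near1 f a1 e1" "near1 g b1 e1'" using thF_near(2) f g by meson
  obtain A E where A: "near0 (f \<circ> g \<circ> inv f \<circ> inv g) A E" "A = a * b * (1/a) * (1/b)"
    using near0_comp[OF near0_comp[OF near0_comp[OF n0] near0_inv[OF n0(1) injf]] near0_inv[OF n0(2) injg]]
    by blast
  obtain A1 E1 where A1: "near1 (f \<circ> g \<circ> inv f \<circ> inv g) A1 E1" "A1 = a1 * b1 * (1/a1) * (1/b1)"
    using near1_comp[OF near1_comp[OF near1_comp[OF n1] near1_inv[OF n1(1) injf]] near1_inv[OF n1(2) injg]]
    by blast
  have "A = 1" "A1 = 1" using A A1 n0 n1 unfolding near0_def near1_def by auto
  then have "\<forall>x\<in>{0..E}. (f \<circ> g \<circ> inv f \<circ> inv g) x = x" "\<forall>x\<in>{1-E1..1}. (f \<circ> g \<circ> inv f \<circ> inv g) x = x"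
    "E > 0" "E1 > 0"
    using A(1) A1(1) unfolding near0_def near1_def by auto
  then show ?thesis by (intro exI[of _ "min E E1"]) auto
qed

context Kloc
begin

lemma in_K:
  assumes cl: "closedF K" and c: "c \<in> thompsonF" and e: "e > 0"
    and ends: "\<forall>x. (0 \<le> x \<and> x \<le> e) \<or> (1 - e \<le> x \<and> x \<le> 1) \<longrightarrow> c x = x"
  shows "c \<in> K"
proof -
  obtain M0 k where Mk: "\<forall>M\<ge>M0. \<forall>j<(2::nat)^M. \<exists>(m::int) b. \<bar>m\<bar> \<le> int k \<and> dyk k b \<and>
           (\<forall>x\<in>cell M j. c x = 2 powr (of_int m) * x + b)" using Gbound[OF c] by blast
  have c0: "c 0 = 0" and c1: "c 1 = 1" and mono: "\<And>x y. 0 \<le> x \<Longrightarrow> x < y \<Longrightarrow> y \<le> 1 \<Longrightarrow> c x < c y"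
    using thF_props[OF c] by simp_all
  obtain E where E: "(1/2::real) ^ E < e" using real_arch_pow_inv[OF e, of "1/2"] by auto
  define M where "M = M0 + 2 * k + E"
  have ME: "(1::real) / 2 ^ M \<le> e"
  proof -
    have "(2::real) ^ E \<le> 2 ^ M" by (rule power_increasing) (simp_all add: M_def)
    then have "(1::real) / 2 ^ M \<le> 1 / 2 ^ E" by (intro divide_left_mono) simp_all
    then show ?thesis using E by (simp add: power_divide)
  qed
  have id: "id \<in> K" using sg unfolding subgroupF_def by blast
  have piece: "\<exists>h\<in>K. \<forall>x\<in>cell M i. c x = h x" if i: "i < 2 ^ M" for i
  proof (cases "i = 0")
    case True
    have "\<forall>x\<in>cell M i. c x = id x"
    proof
      fix x assume "x \<in> cell M i"
      then have "0 \<le> x" "x \<le> e" using True ME unfolding cell_def by auto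
      then show "c x = id x" using ends by simp
    qed
    then show ?thesis using id by blast
  next
    case i0: False
    show ?thesis
    proof (cases "Suc i = 2 ^ M")
      case True
      have "\<forall>x\<in>cell M i. c x = id x"
      proof
        fix x assume x: "x \<in> cell M i"
        have "real (Suc i) = 2 ^ M" using True by (metis of_nat_numeral of_nat_power)
        then have "real i / 2 ^ M = 1 - 1 / 2 ^ M" by (simp add: field_simps)
        then have "1 - e \<le> x" "x \<le> 1" using x ME \<open>real (Suc i) = 2 ^ M\<close> unfolding cell_def by auto
        then show "c x = id x" using ends by simp
      qed
      then show ?thesis using id by blast
    next
      case False
      then have i1: "i + 1 < 2 ^ M" using i by simp
      obtain m b where mb: "\<bar>m\<bar> \<le> int k" "dyk k b" "\<forall>x\<in>cell M i. c x = 2 powr (of_int m) * x + b"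
        using Mk[rule_format, of M i] i unfolding M_def by auto
      have c01: "cell M i \<subseteq> {0..1}" by (rule cell_in01[OF i])
      have cimg: "c x \<in> {0..1}" if "x \<in> {0..1}" for x using thF_props(4)[OF c] that by blast
      have h1: "0 \<le> c (real i / 2^M)" using cimg[of "real i / 2^M"] c01 cell_left[of i M] by auto
      have h2: "c (real (Suc i) / 2^M) \<le> 1" using cimg[of "real (Suc i) / 2^M"] c01 cell_right[of i M] by auto
      have h3: "0 + 2 * k \<le> M" unfolding M_def by simp
      obtain d p where dp: "p < 2^d" "\<forall>x\<in>cell M i. c x = (real p + (x * 2^M - real i)) / 2^d"
        using aff_image[OF mb(3) mb(2) mb(1) h3 h1 h2] by blast
      have cl: "c (real i / 2 ^ M) = real p / 2 ^ d" using dp(2) cell_left[of i M] by simp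
      have cr: "c (real (Suc i) / 2 ^ M) = (real p + 1) / 2 ^ d" using dp(2) cell_right[of i M] by simp
      have "0 < real i / 2 ^ M" using i0 by simp
      then have "c 0 < c (real i / 2 ^ M)" using mono c01 cell_left[of i M] by auto
      then have "0 < real p" using cl c0 by (simp add: zero_less_divide_iff)
      then have p0: "0 < p" by simp
      have "real (Suc i) < 2 ^ M" using i1 by (metis Suc_eq_plus1 of_nat_less_iff of_nat_numeral of_nat_power)
      then have "real (Suc i) / 2 ^ M < 1" by simp
      then have "c (real (Suc i) / 2 ^ M) < c 1" using mono c01 cell_right[of i M] by auto
      then have "real p + 1 < 2 ^ d" using cr c1 by (simp add: divide_less_eq)
      then have "real (p + 1) < real ((2::nat) ^ d)" by simp
      then have p1: "p + 1 < 2 ^ d" by (simp only: of_nat_less_iff)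
      have "intw (bin M i)" by (rule interior_bin) (use i0 i1 in auto)
      moreover have "intw (bin d p)" by (rule interior_bin[OF p0 p1])
      ultimately have "sim (bin M i) (bin d p)" by (rule all_interior)
      then obtain h where h: "h \<in> K" "has_branch h (bin M i) (bin d p)" unfolding simH_def by blast
      have "\<forall>x\<in>cell M i. c x = h x"
      proof
        fix x assume x: "x \<in> cell M i"
        have "x \<in> {real i / 2 ^ M .. real i / 2 ^ M + 1 / 2 ^ M}" using x unfolding cell_def by (simp add: add_divide_distrib)
        then obtain a where a: "x = real i / 2 ^ M + 1 / 2 ^ M * wval a"
          using cell_point[of x "real i / 2 ^ M" "1 / 2 ^ M"] by auto
        have "wval (wcat (bin M i) a) = x" unfolding wval_wcat wfin_bin[OF i] a by simp
        moreover have "wval (wcat (bin d p) a) = (real p + wval a) / 2 ^ d"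
          unfolding wval_wcat wfin_bin[OF dp(1)] by (simp add: add_divide_distrib)
        ultimately have "h x = (real p + wval a) / 2 ^ d" using h(2) unfolding has_branch_def by metis
        moreover have "c x = (real p + wval a) / 2 ^ d"
        proof -
          have "x * 2 ^ M - real i = wval a" using a by (simp add: field_simps)
          then show ?thesis using dp(2) x by simp
        qed
        ultimately show "c x = h x" by simp
      qed
      then show ?thesis using h(1) by blast
    qed
  qed
  have "c \<in> ClF K"
    unfolding ClF_def
  proof (intro CollectI conjI exI[of _ "grid M"])
    show "c \<in> thompsonF" by (rule c)
    show "2 \<le> length (grid M)" "hd (grid M) = 0" "last (grid M) = 1" "sorted_wrt (<) (grid M)"
      using grid_props by auto
    show "\<forall>i. Suc i < length (grid M) \<longrightarrow> (\<exists>h\<in>K. \<forall>x\<in>{grid M ! i..grid M ! Suc i}. c x = h x)"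
    proof (intro allI impI)
      fix i assume "Suc i < length (grid M)"
      then have i: "i < 2 ^ M" and "{grid M ! i..grid M ! Suc i} = cell M i"
        using grid_props(1,6) unfolding cell_def by auto
      then show "\<exists>h\<in>K. \<forall>x\<in>{grid M ! i..grid M ! Suc i}. c x = h x" using piece by simp
    qed
  qed
  then show ?thesis using cl unfolding closedF_def by simp
qed

end

theorem proposition3p6:
  fixes n :: nat
  assumes "n \<ge> 1"
  shows "derivedF \<subseteq> Knn n"
  unfolding Knn_def
proof (rule Inter_greatest)
  fix K assume "K \<in> {K. subgroupF K \<and> closedF K \<and> Kconds n K}"
  then have K: "subgroupF K" "closedF K" "Kconds n K" by auto
  interpret Kloc K n using K(1,3) assms by unfold_locales
  have "\<forall>f\<in>thompsonF. \<forall>g\<in>thompsonF. f \<circ> g \<circ> inv f \<circ> inv g \<in> K"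
  proof (intro ballI)
    fix f g assume f: "f \<in> thompsonF" and g: "g \<in> thompsonF"
    have c: "f \<circ> g \<circ> inv f \<circ> inv g \<in> thompsonF"
      using thF_comp thF_inv f g by simp
    obtain e where "e > 0" "\<forall>x. (0 \<le> x \<and> x \<le> e) \<or> (1 - e \<le> x \<and> x \<le> 1) \<longrightarrow> (f \<circ> g \<circ> inv f \<circ> inv g) x = x"
      using comm_ends[OF f g] by blast
    then show "f \<circ> g \<circ> inv f \<circ> inv g \<in> K" using in_K[OF K(2) c] by blast
  qed
  then show "derivedF \<subseteq> K" unfolding derivedF_def using K(1) by (intro Inter_lower) blast
qed


end
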